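(* Let $d=1$, $I=[a,b]$ with $a<b$, and let $\sigma$ be as in the context with $\sigma(1)<1$ and the exponent $\alpha$ of condition $(\Sigma3)$ satisfying $\alpha>2$. Let $f\in C([a,b])$. Then $$\|K_n(f,\cdot)-f(\cdot)\|_\infty=o(n^{-1}),\qquad n\to+\infty,$$ if and only if $f$ is constant on $[a,b]$.
   Context: $\sigma:\mathbb R\to\mathbb R$ is a non-decreasing sigmoidal function ($\lim_{x\to-\infty}\sigma(x)=0$, $\lim_{x\to+\infty}\sigma(x)=1$) satisfying: $(\Sigma1)$ $\sigma(x)-1/2$ is odd; $(\Sigma2)$ $\sigma\in C^2(\mathbb R)$ and concave on $[0,+\infty)$; $(\Sigma3)$ $\sigma(x)=\mathcal O(|x|^{-1-\alpha})$ as $x\to-\infty$ for some $\alpha>0$. $\phi_\sigma(x):=\frac12[\sigma(x+1)-\sigma(x-1)]$. With $\mathcal K_n:=\{k\in\mathbb Z:\lceil na\rceil\le k\le\lfloor nb\rfloor-1\}$, for $n\in\mathbb N^+$ and $x\in[a,b]$, $$K_n(f,x):=\frac{\sum_{k\in\mathcal K_n}\big[n\int_{k/n}^{(k+1)/n}f(u)du\big]\phi_\sigma(nx-k)}{\sum_{k\in\mathcal K_n}\phi_\sigma(nx-k)},$$ and $\|\cdot\|_\infty$ is the sup-norm on $[a,b]$. *)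

theory Defs
  imports "HOL-Analysis.Analysis" "HOL-Library.Landau_Symbols"
begin

definition sigmoidal :: "(real \<Rightarrow> real) \<Rightarrow> bool" where
  "sigmoidal \<sigma> \<longleftrightarrow> mono \<sigma> \<and> (\<sigma> \<longlongrightarrow> 0) at_bot \<and> (\<sigma> \<longlongrightarrow> 1) at_top"

definition Sigma1 :: "(real \<Rightarrow> real) \<Rightarrow> bool" where
  "Sigma1 \<sigma> \<longleftrightarrow> (\<forall>x. \<sigma> (-x) - 1/2 = - (\<sigma> x - 1/2))"

definition Sigma2 :: "(real \<Rightarrow> real) \<Rightarrow> bool" where
  "Sigma2 \<sigma> \<longleftrightarrow>
     (\<exists>\<sigma>1 \<sigma>2. (\<forall>x. (\<sigma> has_real_derivative \<sigma>1 x) (at x)) \<and>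
               (\<forall>x. (\<sigma>1 has_real_derivative \<sigma>2 x) (at x)) \<and>
               continuous_on UNIV \<sigma>2) \<and>
     concave_on {0..} \<sigma>"

definition Sigma3 :: "(real \<Rightarrow> real) \<Rightarrow> real \<Rightarrow> bool" where
  "Sigma3 \<sigma> \<alpha> \<longleftrightarrow> \<alpha> > 0 \<and> \<sigma> \<in> O[at_bot](\<lambda>x. \<bar>x\<bar> powr (-1 - \<alpha>))"

definition phi_sigma :: "(real \<Rightarrow> real) \<Rightarrow> real \<Rightarrow> real" where
  "phi_sigma \<sigma> x = (\<sigma> (x + 1) - \<sigma> (x - 1)) / 2"

definition Kset :: "real \<Rightarrow> real \<Rightarrow> nat \<Rightarrow> int set" where
  "Kset a b n = {k. \<lceil>real n * a\<rceil> \<le> k \<and> k \<le> \<lfloor>real n * b\<rfloor> - 1}"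

definition kantorovich_nn ::
  "(real \<Rightarrow> real) \<Rightarrow> real \<Rightarrow> real \<Rightarrow> nat \<Rightarrow> (real \<Rightarrow> real) \<Rightarrow> real \<Rightarrow> real" where
  "kantorovich_nn \<sigma> a b n f x =
     (\<Sum>k\<in>Kset a b n. (real n * integral {real_of_int k / real n .. (real_of_int k + 1) / real n} f)
                       * phi_sigma \<sigma> (real n * x - real_of_int k))
     / (\<Sum>k\<in>Kset a b n. phi_sigma \<sigma> (real n * x - real_of_int k))"

definition err_sup ::
  "(real \<Rightarrow> real) \<Rightarrow> real \<Rightarrow> real \<Rightarrow> (real \<Rightarrow> real) \<Rightarrow> nat \<Rightarrow> real" where
  "err_sup \<sigma> a b f n = (SUP x\<in>{a..b}. \<bar>kantorovich_nn \<sigma> a b n f x - f x\<bar>)"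

end

theory Submission
  imports Defs "HOL-Real_Asymp.Real_Asymp"
begin


lemma tele_int:
  fixes F :: "int \<Rightarrow> real"
  assumes "p \<le> q + 1"
  shows "(\<Sum>k\<in>{p..q}. F (k-1) - F (k+1)) = F (p-1) + F p - F q - F (q+1)"
proof -
  have "p - 1 \<le> q" using assms by simp
  then show ?thesis
  proof (induct q rule: int_ge_induct)
    case base
    then show ?case by simp
  next
    case (step i)
    have "{p..i+1} = insert (i+1) {p..i}" using step(1) by auto
    then show ?case using step by simp
  qed
qed

lemma shift_int: "(\<Sum>i\<in>{A..B::int}. F i) = (\<Sum>i\<in>{A+1..B+1}. F (i - 1))"
  by (rule sum.reindex_bij_witness[of _ "\<lambda>i. i - 1" "\<lambda>i. i + 1"]) auto

lemma inv_sq_sum_sym: "(\<Sum>m\<in>{-int N..int N}. 1/(real_of_int \<bar>m\<bar>+1)^2) \<le> 3 - 2/(real N + 1)"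
proof (induct N)
  case 0
  then show ?case by simp
next
  case (Suc N)
  have eq: "{-int (Suc N)..int (Suc N)} = insert (int N + 1) (insert (- int N - 1) {-int N..int N})"
    by auto
  have "(\<Sum>m\<in>{-int (Suc N)..int (Suc N)}. 1/(real_of_int \<bar>m\<bar>+1)^2)
      = 2 / (real N + 2)^2 + (\<Sum>m\<in>{-int N..int N}. 1/(real_of_int \<bar>m\<bar>+1)^2)"
    unfolding eq by (simp add: add.commute)
  also have "\<dots> \<le> 2 / (real N + 2)^2 + 3 - 2/(real N + 1)" using Suc by simp
  also have "\<dots> \<le> 3 - 2 / (real (Suc N) + 1)"
  proof -
    have e: "2/(real N + 1) - 2 / (real N + 2) = 2 / ((real N + 1) * (real N + 2))"
      by (simp add: field_simps)
    have "(real N + 1) * (real N + 2) \<le> (real N + 2)^2" by (simp add: power2_eq_square)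
    then have "2 / (real N + 2)^2 \<le> 2 / ((real N + 1) * (real N + 2))"
      by (intro divide_left_mono) auto
    then have "2 / (real N + 2)^2 \<le> 2/(real N + 1) - 2 / (real N + 2)" using e by simp
    moreover have "2 / (real (Suc N) + 1) = 2 / (real N + 2)" by simp
    ultimately show ?thesis by linarith
  qed
  finally show ?case .
qed

lemma inv_sq_sum: "(\<Sum>m\<in>{A..B::int}. 1/(real_of_int \<bar>m\<bar>+1)^2) \<le> 3"
proof -
  define N where "N = nat (max \<bar>A\<bar> \<bar>B\<bar>)"
  have sub: "{A..B} \<subseteq> {-int N..int N}" by (auto simp: N_def)
  have "(\<Sum>m\<in>{A..B}. 1/(real_of_int \<bar>m\<bar>+1)^2) \<le> (\<Sum>m\<in>{-int N..int N}. 1/(real_of_int \<bar>m\<bar>+1)^2)"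
    by (rule sum_mono2[OF _ sub]) auto
  also have "\<dots> \<le> 3 - 2/(real N + 1)" by (rule inv_sq_sum_sym)
  also have "\<dots> \<le> 3" by simp
  finally show ?thesis .
qed

lemma cells_integral:
  fixes F :: "real \<Rightarrow> real" and n :: real and p q :: int
  assumes n: "n > 0" and pq: "p \<le> q + 1" and cont: "continuous_on {real_of_int p/n..(real_of_int q+1)/n} F"
  shows "integral {real_of_int p/n..(real_of_int q+1)/n} F = (\<Sum>k\<in>{p..q}. integral {real_of_int k/n..(real_of_int k+1)/n} F)"
proof -
  have "p - 1 \<le> q" using pq by simp
  then show ?thesis using cont
  proof (induct q rule: int_ge_induct)
    case base
    then show ?case by simp
  next
    case (step i)
    have ins: "{p..i+1} = insert (i+1) {p..i}" using step(1) by auto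
    have le1: "real_of_int p / n \<le> (real_of_int i + 1) / n" using step(1) n by (simp add: divide_right_mono)
    have le2: "(real_of_int i + 1) / n \<le> (real_of_int i + 1 + 1) / n" using n by (simp add: divide_right_mono)
    have cont': "continuous_on {real_of_int p/n..(real_of_int i + 1 + 1)/n} F" using step(3) by simp
    have c2: "continuous_on {real_of_int p / n..(real_of_int i + 1) / n} F"
      by (rule continuous_on_subset[OF cont']) (use le2 in auto)
    have "integral {real_of_int p/n..(real_of_int i + 1 + 1)/n} F = integral {real_of_int p/n..(real_of_int i + 1)/n} F + integral {(real_of_int i + 1)/n..(real_of_int i + 1 + 1)/n} F"
      using Henstock_Kurzweil_Integration.integral_combine[OF le1 le2 integrable_continuous_real[OF cont']] by simp
    also have "integral {real_of_int p/n..(real_of_int i + 1)/n} F = (\<Sum>k\<in>{p..i}. integral {real_of_int k/n..(real_of_int k+1)/n} F)"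
      using step(2)[OF c2] by simp
    finally show ?case using ins by (simp add: add.commute)
  qed
qed




lemma cell_dev:
  fixes h :: "real \<Rightarrow> real" and n L :: real and i k :: int
  assumes n: "n > 0" and L: "L \<ge> 0" and hc: "continuous_on UNIV h"
    and hL: "\<And>x y. \<bar>h x - h y\<bar> \<le> L * \<bar>x - y\<bar>"
  shows "\<bar>integral {(i-1)/n..i/n} h - h (k/n) / n\<bar> \<le> L * (real_of_int \<bar>i - k\<bar> + 1) / n^2"
proof -
  have le: "(i-1)/n \<le> i/n" using n by (simp add: divide_right_mono)
  have len: "i/n - (i-1)/n = 1/n" using n by (simp add: field_simps)
  have "integral {(i-1)/n..i/n} (\<lambda>x. h x - h (k/n)) = integral {(i-1)/n..i/n} h - h (k/n) / n"
    using le len hc by (subst integral_diff) (auto intro!: integrable_continuous_real continuous_on_subset[OF hc])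
  moreover have "norm (integral {(i-1)/n..i/n} (\<lambda>x. h x - h (k/n))) \<le> (L * (real_of_int \<bar>i - k\<bar> + 1) / n) * (i/n - (i-1)/n)"
  proof (rule integral_bound[OF le])
    show "continuous_on {(i-1)/n..i/n} (\<lambda>x. h x - h (k/n))"
      by (intro continuous_intros continuous_on_subset[OF hc]) auto
    fix t assume t: "t \<in> {(i-1)/n..i/n}"
    have "\<bar>t - k/n\<bar> \<le> (real_of_int \<bar>i - k\<bar> + 1) / n"
    proof -
      have "t*n \<ge> i - 1" "t*n \<le> i" using t n by (auto simp: field_simps)
      then have "\<bar>t*n - k\<bar> \<le> \<bar>i - k\<bar> + 1" by linarith
      moreover have "\<bar>t - k/n\<bar> = \<bar>t*n - k\<bar> / n" using n by (simp add: field_simps abs_div_pos[symmetric])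
      ultimately show ?thesis using n by (simp add: divide_right_mono)
    qed
    then have "\<bar>h t - h (k/n)\<bar> \<le> L * ((real_of_int \<bar>i - k\<bar> + 1) / n)"
      using hL[of t "k/n"] L by (meson mult_left_mono order_trans)
    then show "norm (h t - h (k/n)) \<le> L * (real_of_int \<bar>i - k\<bar> + 1) / n" by simp
  qed
  ultimately show ?thesis using len n by (simp add: power2_eq_square)
qed

lemma inv_sq_sum_shift: "(\<Sum>i\<in>{A..B::int}. 1/(real_of_int \<bar>i - k\<bar>+1)^2) \<le> 3"
proof -
  have "(\<Sum>i\<in>{A..B::int}. 1/(real_of_int \<bar>i - k\<bar>+1)^2) = (\<Sum>m\<in>{A-k..B-k}. 1/(real_of_int \<bar>m\<bar>+1)^2)"
    by (rule sum.reindex_bij_witness[of _ "\<lambda>m. m + k" "\<lambda>i. i - k"]) auto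
  also have "\<dots> \<le> 3" by (rule inv_sq_sum)
  finally show ?thesis .
qed

lemma half_tri:
  fixes A B a b :: real
  assumes "\<bar>A\<bar> \<le> a" "\<bar>B\<bar> \<le> b"
  shows "\<bar>(1/2) * A + (1/2) * B\<bar> \<le> (1/2) * a + (1/2) * b"
  using assms by (simp add: abs_le_iff)

lemma stepF:
  fixes G :: "int \<Rightarrow> real" and h :: "real \<Rightarrow> real" and Sx T :: "int \<Rightarrow> real"
    and n L Ct :: real and p q k :: int
  assumes n: "n > 0" and L: "L \<ge> 0" and hc: "continuous_on UNIV h"
    and hL: "\<And>x y. \<bar>h x - h y\<bar> \<le> L * \<bar>x - y\<bar>"
    and Gd: "\<And>i. G i - G (i-1) = integral {(i-1)/n..i/n} h"
    and G0: "\<And>i. i \<le> p \<or> i \<ge> q \<Longrightarrow> G i = 0"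
    and k: "p \<le> k" "k \<le> q"
    and TS: "\<And>m. T m = Sx m - (if m \<ge> 0 then 1 else 0)"
    and Tsym: "\<And>m. T (-1-m) = - T m"
    and Tb: "\<And>m. \<bar>T m\<bar> \<le> Ct / (real_of_int \<bar>m\<bar> + 1)^3" and Ct: "Ct \<ge> 0"
  shows "\<bar>(1/2) * (\<Sum>j\<in>{p..q}. G j * (Sx (j-k+1) - Sx (j-k-1))) - G k + h (k/n) / (2*n)\<bar>
           \<le> L * (1/2 + 5*Ct) / n^2"
proof -
  define Mw where "Mw = q - p + 3"
  define W where "W = {k-1-Mw..k+Mw}"
  define X where "X i = G (i-1) - G (i+1)" for i
  define hk where "hk = h (k/n)"
  have z: "\<And>i. i \<notin> {p..q} \<Longrightarrow> G i = 0" using G0 by force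
  have A: "(\<Sum>j\<in>{p..q}. G j * Sx (j-k+1)) = (\<Sum>i\<in>W. G (i-1) * Sx (i-k))"
  proof -
    have "(\<Sum>j\<in>{p..q}. G j * Sx (j-k+1)) = (\<Sum>j\<in>{k-2-Mw..k-1+Mw}. G j * Sx (j-k+1))"
      by (rule sum.mono_neutral_left) (use k z in \<open>auto simp: Mw_def\<close>)
    also have "\<dots> = (\<Sum>i\<in>{k-2-Mw+1..k-1+Mw+1}. G (i-1) * Sx (i-1-k+1))" by (rule shift_int)
    also have "\<dots> = (\<Sum>i\<in>W. G (i-1) * Sx (i-k))"
    proof -
      have e1: "{k-2-Mw+1..k-1+Mw+1} = W" unfolding W_def by auto
      show ?thesis unfolding e1 by (intro sum.cong refl) (simp add: algebra_simps)
    qed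
    finally show ?thesis .
  qed
  have B: "(\<Sum>j\<in>{p..q}. G j * Sx (j-k-1)) = (\<Sum>i\<in>W. G (i+1) * Sx (i-k))"
  proof -
    have "(\<Sum>j\<in>{p..q}. G j * Sx (j-k-1)) = (\<Sum>j\<in>{k-Mw..k+1+Mw}. G j * Sx (j-k-1))"
      by (rule sum.mono_neutral_left) (use k z in \<open>auto simp: Mw_def\<close>)
    also have "(\<Sum>i\<in>W. G (i+1) * Sx (i-k)) = (\<Sum>i\<in>{k-1-Mw+1..k+Mw+1}. G (i-1+1) * Sx (i-1-k))"
      unfolding W_def by (rule shift_int)
    moreover have e1: "{k-1-Mw+1..k+Mw+1} = {k-Mw..k+1+Mw}" by auto
    moreover have "(\<Sum>i\<in>{k-Mw..k+1+Mw}. G (i-1+1) * Sx (i-1-k)) = (\<Sum>j\<in>{k-Mw..k+1+Mw}. G j * Sx (j-k-1))"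
      by (intro sum.cong refl) (simp add: algebra_simps)
    ultimately show ?thesis by (simp add: ac_simps)
  qed
  have H: "(1/2) * (\<Sum>j\<in>{p..q}. G j * (Sx (j-k+1) - Sx (j-k-1))) = (1/2) * (\<Sum>i\<in>W. X i * Sx (i-k))"
    by (simp add: right_diff_distrib sum_subtractf A B X_def left_diff_distrib)
  have split: "(\<Sum>i\<in>W. X i * Sx (i-k)) = (\<Sum>i\<in>W. X i * T (i-k)) + (\<Sum>i\<in>W. if k \<le> i then X i else 0)"
    unfolding sum.distrib[symmetric] by (rule sum.cong) (auto simp: TS algebra_simps)
  have tele: "(\<Sum>i\<in>W. if k \<le> i then X i else 0) = G (k-1) + G k"
  proof -
    have "(\<Sum>i\<in>W. if k \<le> i then X i else 0) = (\<Sum>i\<in>{k..k+Mw}. if k \<le> i then X i else 0)"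
      by (rule sum.mono_neutral_right) (auto simp: W_def Mw_def)
    also have "\<dots> = (\<Sum>i\<in>{k..k+Mw}. G (i-1) - G (i+1))" by (rule sum.cong) (auto simp: X_def)
    also have "\<dots> = G (k-1) + G k - G (k+Mw) - G (k+Mw+1)"
      by (rule tele_int) (use k in \<open>simp add: Mw_def\<close>)
    also have "\<dots> = G (k-1) + G k" using k by (simp add: G0 Mw_def)
    finally show ?thesis .
  qed
  have Tsum: "(\<Sum>i\<in>W. T (i-k)) = 0"
  proof -
    have "(\<Sum>i\<in>W. T (i-k)) = (\<Sum>i\<in>W. T ((2*k-1-i)-k))"
      by (rule sum.reindex_bij_witness[of _ "\<lambda>i. 2*k-1-i" "\<lambda>i. 2*k-1-i"]) (auto simp: W_def)
    also have "\<dots> = (\<Sum>i\<in>W. - T (i-k))"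
    proof (rule sum.cong)
      fix i
      have "2*k-1-i-k = -1-(i-k)" by simp
      then show "T (2*k-1-i-k) = - T (i-k)" using Tsym[of "i-k"] by metis
    qed simp
    finally show ?thesis by (simp add: sum_negf)
  qed
  have main: "(1/2) * (\<Sum>j\<in>{p..q}. G j * (Sx (j-k+1) - Sx (j-k-1))) - G k + hk / (2*n)
      = (1/2) * (\<Sum>i\<in>W. (X i + 2*hk/n) * T (i-k)) + (1/2) * (hk/n - (G k - G (k-1)))"
  proof -
    have "(\<Sum>i\<in>W. (X i + 2*hk/n) * T (i-k)) = (\<Sum>i\<in>W. X i * T (i-k)) + (2*hk/n) * (\<Sum>i\<in>W. T (i-k))"
      by (simp add: algebra_simps sum.distrib sum_distrib_left sum_divide_distrib)
    note D1 = this
    have e: "hk/(2*n) = (1/2)*(hk/n)" by simp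
    have "(1/2) * (\<Sum>j\<in>{p..q}. G j * (Sx (j-k+1) - Sx (j-k-1))) - G k + hk / (2*n)
        = (1/2)*((\<Sum>i\<in>W. X i * T (i-k)) + (G (k-1) + G k)) - G k + (1/2)*(hk/n)"
      using H split tele e by simp
    moreover have "(\<Sum>i\<in>W. (X i + 2*hk/n) * T (i-k)) = (\<Sum>i\<in>W. X i * T (i-k))" using D1 Tsum by simp
    ultimately show ?thesis by (simp add: algebra_simps)
  qed
  have cd: "\<bar>G i - G (i-1) - hk / n\<bar> \<le> L * (real_of_int \<bar>i - k\<bar> + 1) / n^2" for i
    using cell_dev[OF n L hc hL, of i k] Gd[of i] by (simp add: hk_def)
  have Xb: "\<bar>X i + 2*hk/n\<bar> \<le> 3 * L * (real_of_int \<bar>i - k\<bar> + 1) / n^2" for i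
  proof -
    have c1: "\<bar>G (i+1) - G i - hk / n\<bar> \<le> L * (real_of_int \<bar>i - k\<bar> + 2) / n^2"
    proof -
      have "\<bar>G (i+1) - G (i+1-1) - hk / n\<bar> \<le> L * (real_of_int \<bar>i+1 - k\<bar> + 1) / n^2" by (rule cd)
      also have "\<dots> \<le> L * (real_of_int \<bar>i - k\<bar> + 2) / n^2"
        using L n by (intro divide_right_mono mult_left_mono) auto
      finally show ?thesis by simp
    qed
    have "X i + 2*hk/n = - ((G (i+1) - G i - hk / n) + (G i - G (i-1) - hk / n))"
      by (simp add: X_def)
    then have "\<bar>X i + 2*hk/n\<bar> \<le> L * (real_of_int \<bar>i - k\<bar> + 2) / n^2 + L * (real_of_int \<bar>i - k\<bar> + 1) / n^2"
      using c1 cd[of i] by linarith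
    also have "\<dots> \<le> 3 * L * (real_of_int \<bar>i - k\<bar> + 1) / n^2"
    proof -
      define r where "r = real_of_int \<bar>i - k\<bar>"
      have r: "r \<ge> 0" by (simp add: r_def)
      have "L * (r + 2) / n^2 + L * (r + 1) / n^2 = L * (2*r + 3) / n^2" by (simp add: add_divide_distrib[symmetric] algebra_simps)
      moreover have "L * (2*r + 3) \<le> 3 * L * (r + 1)"
      proof -
        have "L * (2*r+3) + L * r = 3 * L * (r+1)" by (simp add: algebra_simps)
        moreover have "L * r \<ge> 0" using L r by simp
        ultimately show ?thesis by linarith
      qed
      ultimately show ?thesis unfolding r_def[symmetric] using n by (simp add: divide_right_mono)
    qed
    finally show ?thesis .
  qed
  have termb: "\<bar>(X i + 2*hk/n) * T (i-k)\<bar> \<le> (3 * L * Ct / n^2) * (1 / (real_of_int \<bar>i - k\<bar> + 1)^2)" for i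
  proof -
    define r where "r = real_of_int \<bar>i - k\<bar> + 1"
    have r: "r \<ge> 1" by (simp add: r_def)
    have "\<bar>(X i + 2*hk/n) * T (i-k)\<bar> \<le> (3 * L * r / n^2) * (Ct / r^3)"
      unfolding abs_mult r_def using Xb[of i] Tb[of "i-k"] L
      by (intro mult_mono) auto
    also have "\<dots> = (3 * L * Ct / n^2) * (1 / r^2)" using r by (simp add: field_simps power2_eq_square power3_eq_cube)
    finally show ?thesis by (simp add: r_def)
  qed
  have s1: "\<bar>\<Sum>i\<in>W. (X i + 2*hk/n) * T (i-k)\<bar> \<le> 9 * L * Ct / n^2"
  proof -
    have "\<bar>\<Sum>i\<in>W. (X i + 2*hk/n) * T (i-k)\<bar> \<le> (\<Sum>i\<in>W. \<bar>(X i + 2*hk/n) * T (i-k)\<bar>)"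
      by (rule sum_abs)
    also have "\<dots> \<le> (\<Sum>i\<in>W. (3 * L * Ct / n^2) * (1 / (real_of_int \<bar>i - k\<bar> + 1)^2))"
      by (rule sum_mono) (rule termb)
    also have "\<dots> = (3 * L * Ct / n^2) * (\<Sum>i\<in>W. 1 / (real_of_int \<bar>i - k\<bar> + 1)^2)"
      by (simp add: sum_distrib_left)
    also have "\<dots> \<le> (3 * L * Ct / n^2) * 3"
      unfolding W_def using L Ct by (intro mult_left_mono inv_sq_sum_shift) auto
    finally show ?thesis by simp
  qed
  have s2: "\<bar>hk/n - (G k - G (k-1))\<bar> \<le> L / n^2" using cd[of k] by simp
  have "\<bar>(1/2) * (\<Sum>i\<in>W. (X i + 2*hk/n) * T (i-k)) + (1/2) * (hk/n - (G k - G (k-1)))\<bar>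
      \<le> (1/2) * (9 * L * Ct / n^2) + (1/2) * (L / n^2)"
    using half_tri[OF s1 s2] .
  also have "\<dots> \<le> L * (1/2 + 5*Ct) / n^2"
  proof -
    have "(1/2) * (9 * L * Ct / n^2) + (1/2) * (L / n^2) = L * (1/2 + (9/2)*Ct) / n^2" by (simp add: field_simps add_divide_distrib[symmetric])
    moreover have "L * (1/2 + (9/2)*Ct) \<le> L * (1/2 + 5*Ct)" using L Ct by (intro mult_left_mono) auto
    ultimately show ?thesis using n by (simp add: divide_right_mono)
  qed
  finally show ?thesis using main by (simp add: hk_def)
qed




definition tent :: "real \<Rightarrow> real \<Rightarrow> real \<Rightarrow> real" where
  "tent c e x = max 0 (e - \<bar>x - c\<bar>)"

lemma tent_cont: "continuous_on S (tent c e)"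
  unfolding tent_def by (intro continuous_intros)

lemma tent_lip: "\<bar>tent c e x - tent c e y\<bar> \<le> \<bar>x - y\<bar>"
  unfolding tent_def by (simp add: max_def abs_if)

lemma tent_zero: "\<bar>x - c\<bar> \<ge> e \<Longrightarrow> tent c e x = 0"
  unfolding tent_def by simp

lemma tent_nonneg: "tent c e x \<ge> 0"
  unfolding tent_def by simp

lemma tent_has_integral:
  assumes e: "e > 0" and ac: "a \<le> c - e" and cb: "c + e \<le> b"
  shows "(tent c e has_integral e^2) {a..b}"
proof -
  have i1: "(tent c e has_integral 0) {a..c-e}"
    by (rule has_integral_eq[of _ "\<lambda>x. 0"]) (auto simp: tent_zero)
  have i4: "(tent c e has_integral 0) {c+e..b}"
    by (rule has_integral_eq[of _ "\<lambda>x. 0"]) (auto simp: tent_zero)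
  have i2: "(tent c e has_integral e^2/2) {c-e..c}"
  proof -
    have "((\<lambda>x. x - c + e) has_integral ((c - c + e)^2/2 - (c - e - c + e)^2/2)) {c-e..c}"
      by (rule fundamental_theorem_of_calculus[of _ _ "\<lambda>x. (x - c + e)^2/2"]) (use e in \<open>auto intro!: derivative_eq_intros simp: has_real_derivative_iff_has_vector_derivative[symmetric]\<close>)
    then have "((\<lambda>x. x - c + e) has_integral e^2/2) {c-e..c}" by simp
    then show ?thesis by (rule has_integral_eq[rotated]) (auto simp: tent_def)
  qed
  have i3: "(tent c e has_integral e^2/2) {c..c+e}"
  proof -
    define P where "P x = - ((e - (x - c))^2/2)" for x
    have "((\<lambda>x. e - (x - c)) has_integral (P (c+e) - P c)) {c..c+e}"
      unfolding P_def by (rule fundamental_theorem_of_calculus) (use e in \<open>auto intro!: derivative_eq_intros simp: has_real_derivative_iff_has_vector_derivative[symmetric] field_simps\<close>)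
    then have "((\<lambda>x. e - (x - c)) has_integral e^2/2) {c..c+e}" by (simp add: P_def)
    then show ?thesis by (rule has_integral_eq[rotated]) (auto simp: tent_def)
  qed
  have "(tent c e has_integral (e^2/2 + e^2/2)) {c-e..c+e}"
    by (rule has_integral_combine[OF _ _ i2 i3]) (use e in auto)
  then have "(tent c e has_integral (0 + (e^2/2 + e^2/2))) {a..c+e}"
    by (intro has_integral_combine[OF _ _ i1]) (use e ac in auto)
  then have "(tent c e has_integral (0 + (e^2/2 + e^2/2) + 0)) {a..b}"
    by (intro has_integral_combine[OF _ _ _ i4]) (use e ac cb in auto)
  then show ?thesis by simp
qed




locale sigctx =
  fixes \<sigma> :: "real \<Rightarrow> real" and \<alpha> :: real
  assumes sig: "sigmoidal \<sigma>" and S1: "Sigma1 \<sigma>" and S2: "Sigma2 \<sigma>"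
    and S3: "Sigma3 \<sigma> \<alpha>" and s1: "\<sigma> 1 < 1" and al: "\<alpha> > 2"
begin

lemma mono_s: "x \<le> y \<Longrightarrow> \<sigma> x \<le> \<sigma> y"
  using sig unfolding sigmoidal_def mono_def by blast

lemma lim_top: "(\<sigma> \<longlongrightarrow> 1) at_top" and lim_bot: "(\<sigma> \<longlongrightarrow> 0) at_bot"
  using sig unfolding sigmoidal_def by auto

lemma s_le1: "\<sigma> x \<le> 1"
proof (rule tendsto_lowerbound[OF lim_top])
  show "\<forall>\<^sub>F i in at_top. \<sigma> x \<le> \<sigma> i"
    by (rule eventually_at_top_linorderI[of x]) (rule mono_s)
qed simp

lemma s_ge0: "\<sigma> x \<ge> 0"
proof (rule tendsto_upperbound[OF lim_bot])
  show "\<forall>\<^sub>F i in at_bot. \<sigma> i \<le> \<sigma> x"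
    by (rule eventually_at_bot_linorderI[of x]) (rule mono_s)
qed simp

lemma s_neg: "\<sigma> (-x) = 1 - \<sigma> x"
proof -
  have "\<sigma> (-x) - 1/2 = - (\<sigma> x - 1/2)" using S1 unfolding Sigma1_def by blast
  then show ?thesis by linarith
qed

lemma s_0: "\<sigma> 0 = 1/2"
  using s_neg[of 0] by simp

lemma s_cont: "continuous_on S \<sigma>"
proof -
  obtain s1 where "\<And>x. (\<sigma> has_real_derivative s1 x) (at x)"
    using S2 unfolding Sigma2_def by blast
  then have "\<And>x. isCont \<sigma> x" using DERIV_isCont by blast
  then show ?thesis by (simp add: continuous_at_imp_continuous_on)
qed

lemma s_strict:
  assumes "0 \<le> s" "s < t" "\<sigma> s < 1"
  shows "\<sigma> s < \<sigma> t"
proof (rule ccontr)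
  assume "\<not> \<sigma> s < \<sigma> t"
  with mono_s[of s t] assms have eq: "\<sigma> t = \<sigma> s" by linarith
  have conc: "concave_on {0..} \<sigma>" using S2 unfolding Sigma2_def by blast
  have "\<forall>\<^sub>F y in at_top. \<sigma> y \<le> \<sigma> s"
  proof (rule eventually_at_top_linorderI[of "t+1"])
    fix y assume y: "y \<ge> t + 1"
    define l where "l = (t - s) / (y - s)"
    have l0: "0 \<le> l" "l \<le> 1" using assms y by (auto simp: l_def field_simps)
    have l1: "l < 1" using assms y by (auto simp: l_def field_simps)
    have ys: "y - s > 0" using assms y by simp
    have "l * (y - s) = t - s" using ys by (simp add: l_def)
    then have "(1 - l) * s + l * y = t" by (simp add: algebra_simps)
    then have "\<sigma> t \<ge> (1 - l) * \<sigma> s + l * \<sigma> y"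
      using concave_onD[OF conc, of l s y] l0 assms y by auto
    with eq have "l * \<sigma> y \<le> l * \<sigma> s" by (simp add: algebra_simps)
    moreover have "l > 0" using assms y by (auto simp: l_def field_simps)
    ultimately show "\<sigma> y \<le> \<sigma> s" by simp
  qed
  then have "1 \<le> \<sigma> s" using tendsto_upperbound[OF lim_top] by simp
  with assms show False by simp
qed

lemma s_pos_half: "t > 0 \<Longrightarrow> \<sigma> t > 1/2"
  using s_strict[of 0 t] s_0 by simp

lemma s_neg_half: "t < 0 \<Longrightarrow> \<sigma> t < 1/2"
  using s_pos_half[of "-t"] s_neg[of "-t"] by simp

lemma s_gap: assumes "t < s" "0 < s" "t < 1" shows "\<sigma> t < \<sigma> s"
proof (cases "t < 0")
  case True
  then show ?thesis using s_neg_half[of t] mono_s[of 0 s] s_0 assms by simp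
next
  case False
  have "\<sigma> t \<le> \<sigma> 1" using assms mono_s by simp
  then show ?thesis using s_strict[of t s] False assms s1 by simp
qed

lemma tail: obtains C where "C > 0" "\<And>t. t \<ge> 0 \<Longrightarrow> \<sigma> (-t) \<le> C / (t+1)^3"
proof -
  from S3 have "\<sigma> \<in> O[at_bot](\<lambda>x. \<bar>x\<bar> powr (-1 - \<alpha>))" unfolding Sigma3_def by blast
  then obtain c where c: "c > 0" "\<forall>\<^sub>F x in at_bot. norm (\<sigma> x) \<le> c * norm (\<bar>x\<bar> powr (-1 - \<alpha>))"
    by (elim landau_o.bigE)
  then obtain X where X0: "\<And>x. x \<le> X \<Longrightarrow> \<bar>\<sigma> x\<bar> \<le> c * (\<bar>x\<bar> powr (-1 - \<alpha>))"
    unfolding eventually_at_bot_linorder by auto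
  have X: "\<sigma> x \<le> c * (\<bar>x\<bar> powr (-1 - \<alpha>))" if "x \<le> X" for x
    using X0[OF that] by linarith
  define T0 where "T0 = max 1 (-X)"
  define C where "C = max (8*c) ((T0+1)^3)"
  have Cp: "C > 0" using c by (simp add: C_def)
  have "\<sigma> (-t) \<le> C / (t+1)^3" if t: "t \<ge> 0" for t
  proof (cases "t \<ge> T0")
    case True
    then have t1: "t \<ge> 1" and tX: "-t \<le> X" by (auto simp: T0_def)
    have "\<sigma> (-t) \<le> c * (t powr (-1 - \<alpha>))" using X[OF tX] t by simp
    also have "t powr (-1 - \<alpha>) \<le> t powr (-3)"
      using t1 al by (intro powr_mono) auto
    also have "t powr (-3) = 1 / t^3" using t1 by (simp add: powr_minus powr_realpow divide_inverse)
    also have "c * (1 / t^3) \<le> 8 * c / (t+1)^3"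
    proof -
      have "(t+1)^3 \<le> (2*t)^3" using t1 by (intro power_mono) auto
      then have "(t+1)^3 \<le> 8 * t^3" by (simp add: power_mult_distrib)
      then show ?thesis using c t1 by (simp add: field_simps)
    qed
    also have "\<dots> \<le> C / (t+1)^3" using t by (intro divide_right_mono) (auto simp: C_def)
    finally show ?thesis using c by (simp add: mult_left_mono)
  next
    case False
    have "\<sigma> (-t) \<le> 1" by (rule s_le1)
    also have "1 \<le> (T0+1)^3 / (t+1)^3"
      using False t by (simp add: field_simps)
    also have "\<dots> \<le> C / (t+1)^3" using t by (intro divide_right_mono) (auto simp: C_def)
    finally show ?thesis .
  qed
  with Cp that show ?thesis by blast
qed

end



context sigctx begin

definition S :: "real \<Rightarrow> real" where "S m = integral {m..m+1} \<sigma>"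
definition T :: "int \<Rightarrow> real" where "T m = S (real_of_int m) - (if m \<ge> 0 then 1 else 0)"

lemma s_int: "\<sigma> integrable_on {x..y}"
  by (rule integrable_continuous_real) (rule s_cont)

lemma s_cont_comp [continuous_intros]: "continuous_on A g \<Longrightarrow> continuous_on A (\<lambda>x. \<sigma> (g x))"
  using continuous_on_compose2[OF s_cont[of UNIV], of A g] by auto

lemma phi_cont_comp [continuous_intros]: "continuous_on A g \<Longrightarrow> continuous_on A (\<lambda>x. phi_sigma \<sigma> (g x))"
  unfolding phi_sigma_def by (intro continuous_intros) auto

lemma s_int2: "(\<lambda>x. 1 - \<sigma> x) integrable_on {x..y}"
  by (intro integrable_continuous_real continuous_intros s_cont)

lemma cell_sig:
  assumes n: "n > 0"
  shows "((\<lambda>x. \<sigma> (n*x + c)) has_integral (S A / n)) {(A - c)/n..(A+1-c)/n}"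
proof -
  have "(\<sigma> has_integral S A) (cbox A (A+1))"
    unfolding S_def using s_int by (simp add: has_integral_integral)
  from has_integral_affinity'[OF this n, of c] show ?thesis
    by (simp add: divide_inverse mult.commute)
qed

lemma S_sym: "S (-1 - m) = 1 - S m"
proof -
  have "(\<sigma> has_integral S (-1-m)) {-1-m..-m}"
    unfolding S_def using s_int by (simp add: has_integral_integral)
  then have "((\<lambda>x. \<sigma> (-x)) has_integral S (-1-m)) {m..m+1}"
  proof -
    have e: "{- (- m)..- (-1 - m)} = {m..m+1}" by auto
    have "((\<lambda>x. \<sigma> (-x)) has_integral S(-1-m)) {-(-m)..-(-1-m)}"
      by (rule iffD2[OF has_integral_reflect_real]) fact
    then show ?thesis unfolding e .
  qed
  then have "((\<lambda>x. 1 - \<sigma> x) has_integral S (-1-m)) {m..m+1}" by (simp add: s_neg)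
  moreover have "((\<lambda>x. 1 - \<sigma> x) has_integral (1 - S m)) {m..m+1}"
    unfolding S_def using s_int
    by (intro has_integral_diff) (auto simp: has_integral_integral intro: has_integral_const_real[of 1 m "m+1", simplified])
  ultimately show ?thesis by (rule has_integral_unique)
qed

lemma S_pos_bound:
  assumes "m \<ge> 0" shows "\<bar>S m - 1\<bar> \<le> \<sigma> (-m)"
proof -
  have i1: "integral {m..m+1} (\<lambda>x. 1 - \<sigma> x) = 1 - S m"
    unfolding S_def using s_int by (subst integral_diff) auto
  have "integral {m..m+1} (\<lambda>x. 1 - \<sigma> x) \<le> integral {m..m+1} (\<lambda>x. \<sigma> (-m))"
    using s_int2 by (intro integral_le) (auto simp: s_neg[of m] intro!: mono_s)
  moreover have "integral {m..m+1} (\<lambda>x. 1 - \<sigma> x) \<ge> integral {m..m+1} (\<lambda>x. 0)"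
    using s_int2 by (intro integral_le) (auto simp: s_le1)
  ultimately show ?thesis using i1 by simp
qed

lemma S_neg_bound:
  assumes "m + 1 \<le> 0" shows "\<bar>S m\<bar> \<le> \<sigma> (m+1)"
proof -
  have "integral {m..m+1} \<sigma> \<le> integral {m..m+1} (\<lambda>x. \<sigma> (m+1))"
    using s_int by (intro integral_le) (auto intro!: mono_s)
  moreover have "integral {m..m+1} \<sigma> \<ge> integral {m..m+1} (\<lambda>x. 0)"
    using s_int by (intro integral_le) (auto simp: s_ge0)
  ultimately show ?thesis unfolding S_def by simp
qed

lemma T_sym: "T (-1 - m) = - T m"
  using S_sym[of "real_of_int m"] by (simp add: T_def)

lemma T_bound: obtains Ct where "Ct > 0" "\<And>m. \<bar>T m\<bar> \<le> Ct / (real_of_int \<bar>m\<bar> + 1)^3"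
proof -
  obtain C where C: "C > 0" "\<And>t. t \<ge> 0 \<Longrightarrow> \<sigma> (-t) \<le> C / (t+1)^3" using tail by blast
  have "\<bar>T m\<bar> \<le> (8*C) / (real_of_int \<bar>m\<bar> + 1)^3" for m
  proof (cases "m \<ge> 0")
    case True
    then have "\<bar>T m\<bar> \<le> \<sigma> (- real_of_int m)" using S_pos_bound[of "real_of_int m"] by (simp add: T_def)
    also have "\<dots> \<le> C / (real_of_int m + 1)^3" using C(2)[of "real_of_int m"] True by simp
    also have "\<dots> \<le> 8*C / (real_of_int m + 1)^3" using C(1) True by (simp add: divide_right_mono)
    finally show ?thesis using True by simp
  next
    case False
    then have "\<bar>T m\<bar> \<le> \<sigma> (real_of_int m + 1)" using S_neg_bound[of "real_of_int m"] by (simp add: T_def)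
    also have "\<dots> = \<sigma> (- (real_of_int \<bar>m\<bar> - 1))" using False by (simp add: add.commute)
    also have "\<dots> \<le> C / (real_of_int \<bar>m\<bar> - 1 + 1)^3" using C(2)[of "real_of_int \<bar>m\<bar> - 1"] False by simp
    also have "\<dots> \<le> 8*C / (real_of_int \<bar>m\<bar> + 1)^3"
    proof -
      have m1: "real_of_int \<bar>m\<bar> \<ge> 1" using False by simp
      have "(real_of_int \<bar>m\<bar> + 1)^3 \<le> (2 * real_of_int \<bar>m\<bar>)^3" using m1 by (intro power_mono) auto
      then have "(real_of_int \<bar>m\<bar> + 1)^3 \<le> 8 * (real_of_int \<bar>m\<bar>)^3" by (simp add: power_mult_distrib)
      then show ?thesis using C(1) m1 by (simp add: field_simps)
    qed
    finally show ?thesis .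
  qed
  moreover have "8*C > 0" using C by simp
  ultimately show ?thesis using that by blast
qed

definition Ct :: real where "Ct = (SOME c. c > 0 \<and> (\<forall>m. \<bar>T m\<bar> \<le> c / (real_of_int \<bar>m\<bar> + 1)^3))"

lemma Ct_prop: "Ct > 0 \<and> (\<forall>m. \<bar>T m\<bar> \<le> Ct / (real_of_int \<bar>m\<bar> + 1)^3)"
proof -
  obtain c where "c > 0" "\<And>m. \<bar>T m\<bar> \<le> c / (real_of_int \<bar>m\<bar> + 1)^3" using T_bound by blast
  then have "\<exists>c. c > 0 \<and> (\<forall>m. \<bar>T m\<bar> \<le> c / (real_of_int \<bar>m\<bar> + 1)^3)" by blast
  then show ?thesis unfolding Ct_def by (rule someI_ex)
qed

lemma Ct_pos: "Ct > 0" and Ct_bound: "\<bar>T m\<bar> \<le> Ct / (real_of_int \<bar>m\<bar> + 1)^3"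
  using Ct_prop by auto

lemma phi_nonneg: "phi_sigma \<sigma> t \<ge> 0"
  unfolding phi_sigma_def using mono_s[of "t-1" "t+1"] by simp

lemma D_eq:
  fixes p q :: int
  assumes "p \<le> q + 1"
  shows "(\<Sum>k\<in>{p..q}. phi_sigma \<sigma> (u - real_of_int k))
     = (\<sigma> (u - p + 1) + \<sigma> (u - p) - \<sigma> (u - q) - \<sigma> (u - q - 1)) / 2"
proof -
  define F where "F k = \<sigma> (u - real_of_int k)" for k :: int
  have "(\<Sum>k\<in>{p..q}. phi_sigma \<sigma> (u - real_of_int k)) = (\<Sum>k\<in>{p..q}. (F (k-1) - F (k+1)) / 2)"
    by (intro sum.cong) (auto simp: phi_sigma_def F_def algebra_simps)
  also have "\<dots> = (\<Sum>k\<in>{p..q}. F (k-1) - F (k+1)) / 2" by (simp add: sum_divide_distrib)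
  also have "\<dots> = (F (p-1) + F p - F q - F (q+1)) / 2" using tele_int[OF assms] by simp
  finally show ?thesis by (simp add: F_def algebra_simps)
qed

end



locale satctx = sigctx +
  fixes a b :: real and f h g :: "real \<Rightarrow> real" and M \<delta> L Gb :: real
  assumes ab: "a < b" and fc: "continuous_on {a..b} f" and fM: "\<And>x. x \<in> {a..b} \<Longrightarrow> \<bar>f x\<bar> \<le> M"
    and dl: "\<delta> > 0" and hc: "continuous_on UNIV h" and hL: "\<And>x y. \<bar>h x - h y\<bar> \<le> L * \<bar>x - y\<bar>"
    and L: "L \<ge> 0"
    and h0: "\<And>x. x \<le> a + \<delta> \<or> x \<ge> b - \<delta> \<Longrightarrow> h x = 0"
    and gd: "\<And>x y. x \<le> y \<Longrightarrow> g y - g x = integral {x..y} h"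
    and g0: "\<And>x. x \<le> a + \<delta> \<or> x \<ge> b - \<delta> \<Longrightarrow> g x = 0"
    and gb: "\<And>x. \<bar>g x\<bar> \<le> Gb"

locale satn = satctx +
  fixes n :: nat
  assumes nd: "real n * \<delta> \<ge> 3" and nba: "real n * (b - a) \<ge> 2"
begin

definition "nn = real n"
definition "p = \<lceil>nn * a\<rceil>"
definition "q = \<lfloor>nn * b\<rfloor> - 1"
definition "v k = nn * integral {real_of_int k / nn .. (real_of_int k + 1) / nn} f" for k :: int
definition "Dn x = (\<Sum>k\<in>{p..q}. phi_sigma \<sigma> (nn * x - real_of_int k))" for x
definition "Nn x = (\<Sum>k\<in>{p..q}. v k * phi_sigma \<sigma> (nn * x - real_of_int k))" for x

lemma M0: "M \<ge> 0" using fM[of a] ab by auto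
lemma Gb0: "Gb \<ge> 0" using gb[of 0] by auto
lemma nn_pos: "nn > 0" using nd dl unfolding nn_def
  by (metis less_numeral_extra(3) mult_eq_0_iff not_gr_zero of_nat_0_less_iff of_nat_eq_0_iff zero_less_numeral
      order_less_le_trans)
lemma nd': "nn * \<delta> \<ge> 3" using nd by (simp add: nn_def)

lemma Kset_eq: "Kset a b n = {p..q}"
  by (auto simp: Kset_def p_def q_def nn_def)

lemma K_eq: "kantorovich_nn \<sigma> a b n f x = Nn x / Dn x"
  by (simp add: kantorovich_nn_def Kset_eq Nn_def Dn_def v_def nn_def)

lemma p_lo: "real_of_int p \<ge> nn * a" and p_hi: "real_of_int p < nn * a + 1"
  using ceiling_correct[of "nn*a"] unfolding p_def by linarith+
lemma q_lo: "real_of_int q > nn * b - 2" and q_hi: "real_of_int q + 1 \<le> nn * b"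
  by (auto simp: q_def) linarith+


lemma pq: "p \<le> q"
proof -
  have "real_of_int q - real_of_int p > nn * (b - a) - 3" using p_hi q_lo by (simp add: algebra_simps)
  moreover have "nn * (b - a) \<ge> 2" using nba by (simp add: nn_def)
  ultimately have "real_of_int (q - p) > -1" by simp
  then show ?thesis by linarith
qed

lemma cardK: "real (card {p..q}) \<le> nn * (b - a)"
proof -
  have "real (card {p..q}) = real_of_int (q - p + 1)" using pq by simp
  also have "\<dots> \<le> nn * (b - a)" using p_lo q_hi by (simp add: algebra_simps)
  finally show ?thesis .
qed

lemma cell_sub: assumes "k \<in> {p..q}" shows "{real_of_int k / nn .. (real_of_int k + 1) / nn} \<subseteq> {a..b}"
proof -
  have "real_of_int k \<ge> nn * a" using assms p_lo by simp
  then have "real_of_int k / nn \<ge> a" using nn_pos by (simp add: field_simps)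
  moreover have "real_of_int k + 1 \<le> nn * b" using assms q_hi by simp
  then have "(real_of_int k + 1) / nn \<le> b" using nn_pos by (simp add: field_simps)
  ultimately show ?thesis by auto
qed

lemma Dn_eq: "Dn x = (\<sigma> (nn*x - p + 1) + \<sigma> (nn*x - p) - \<sigma> (nn*x - q) - \<sigma> (nn*x - q - 1)) / 2"
  unfolding Dn_def using D_eq[of p q "nn*x"] pq by simp

lemma Dn_le1: "Dn x \<le> 1"
  unfolding Dn_eq using s_le1[of "nn*x - p + 1"] s_le1[of "nn*x - p"] s_ge0[of "nn*x - q"] s_ge0[of "nn*x - q - 1"]
  by simp

lemma Dn_pos: assumes "x \<in> {a..b}" shows "Dn x > 0"
proof -
  have u1: "nn * x \<ge> nn * a" "nn * x \<le> nn * b" using assms nn_pos by (auto intro: mult_left_mono)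
  have "\<sigma> (nn*x - q - 1) < \<sigma> (nn*x - p + 1)"
    by (rule s_gap) (use u1 p_hi q_lo pq in auto)
  moreover have "\<sigma> (nn*x - q) \<le> \<sigma> (nn*x - p)" by (rule mono_s) (use pq in simp)
  ultimately show ?thesis unfolding Dn_eq by simp
qed

lemma v_bound: assumes "k \<in> {p..q}" shows "\<bar>v k\<bar> \<le> M"
proof -
  have le: "real_of_int k / nn \<le> (real_of_int k + 1) / nn" using nn_pos by (simp add: divide_right_mono)
  have "norm (integral {real_of_int k / nn .. (real_of_int k + 1) / nn} f) \<le> M * ((real_of_int k + 1) / nn - real_of_int k / nn)"
    by (rule integral_bound[OF le]) (use cell_sub[OF assms] fM in \<open>auto intro: continuous_on_subset[OF fc]\<close>)
  also have "(real_of_int k + 1) / nn - real_of_int k / nn = 1 / nn" using nn_pos by (simp add: field_simps)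
  finally show ?thesis unfolding v_def using nn_pos by (simp add: abs_mult field_simps)
qed

lemma Nn_bound: "\<bar>Nn x\<bar> \<le> M * Dn x"
proof -
  have "\<bar>Nn x\<bar> \<le> (\<Sum>k\<in>{p..q}. \<bar>v k * phi_sigma \<sigma> (nn * x - real_of_int k)\<bar>)"
    unfolding Nn_def by (rule sum_abs)
  also have "\<dots> \<le> (\<Sum>k\<in>{p..q}. M * phi_sigma \<sigma> (nn * x - real_of_int k))"
    by (rule sum_mono) (auto simp: abs_mult phi_nonneg intro!: mult_right_mono v_bound)
  also have "\<dots> = M * Dn x" by (simp add: Dn_def sum_distrib_left)
  finally show ?thesis .
qed

lemma err_bound: assumes "x \<in> {a..b}" shows "\<bar>Nn x - f x * Dn x\<bar> \<le> err_sup \<sigma> a b f n"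
proof -
  have bdd: "bdd_above ((\<lambda>x. \<bar>kantorovich_nn \<sigma> a b n f x - f x\<bar>) ` {a..b})"
  proof (rule bdd_aboveI2)
    fix y assume y: "y \<in> {a..b}"
    have D: "Dn y > 0" by (rule Dn_pos[OF y])
    have "\<bar>Nn y / Dn y\<bar> = \<bar>Nn y\<bar> / Dn y" using D by simp
    also have "\<dots> \<le> M" using Nn_bound[of y] by (subst pos_divide_le_eq[OF D])
    finally have "\<bar>Nn y / Dn y\<bar> \<le> M" .
    then show "\<bar>kantorovich_nn \<sigma> a b n f y - f y\<bar> \<le> 2 * M" using fM[OF y] K_eq[of y] by linarith
  qed
  have "\<bar>kantorovich_nn \<sigma> a b n f x - f x\<bar> \<le> err_sup \<sigma> a b f n"
    unfolding err_sup_def by (rule cSUP_upper[OF assms bdd])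
  moreover have D: "Dn x > 0" "Dn x \<le> 1" using Dn_pos[OF assms] Dn_le1 by auto
  moreover have "\<bar>Nn x - f x * Dn x\<bar> = Dn x * \<bar>kantorovich_nn \<sigma> a b n f x - f x\<bar>"
  proof -
    have "Nn x - f x * Dn x = Dn x * (Nn x / Dn x - f x)" using D by (simp add: right_diff_distrib)
    then show ?thesis unfolding K_eq using D by (simp add: abs_mult)
  qed
  moreover have "Dn x * \<bar>kantorovich_nn \<sigma> a b n f x - f x\<bar> \<le> \<bar>kantorovich_nn \<sigma> a b n f x - f x\<bar>"
    using D mult_right_mono[of "Dn x" 1 "\<bar>kantorovich_nn \<sigma> a b n f x - f x\<bar>"] by simp
  ultimately show ?thesis by linarith
qed

lemma Dn_cont: "continuous_on A Dn"
  unfolding Dn_def by (intro continuous_intros)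
lemma Nn_cont: "continuous_on A Nn"
  unfolding Nn_def by (intro continuous_intros)

lemma cell_le: "real_of_int j / nn \<le> (real_of_int j + 1) / nn"
  using nn_pos by (simp add: divide_right_mono)
lemma cell_len: "(real_of_int j + 1) / nn - real_of_int j / nn = 1 / nn"
  using nn_pos by (simp add: field_simps)

lemma cell_phi:
  "integral {real_of_int j / nn .. (real_of_int j + 1) / nn} (\<lambda>x. phi_sigma \<sigma> (nn * x - real_of_int k))
     = (S (real_of_int (j - k + 1)) - S (real_of_int (j - k - 1))) / (2 * nn)"
proof -
  have i1: "((\<lambda>x. \<sigma> (nn*x + (1 - real_of_int k))) has_integral (S (real_of_int (j - k + 1)) / nn))
      {real_of_int j / nn .. (real_of_int j + 1) / nn}"
    using cell_sig[OF nn_pos, of "1 - real_of_int k" "real_of_int (j - k + 1)"] by (simp add: algebra_simps)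
  have i2: "((\<lambda>x. \<sigma> (nn*x + (- 1 - real_of_int k))) has_integral (S (real_of_int (j - k - 1)) / nn))
      {real_of_int j / nn .. (real_of_int j + 1) / nn}"
    using cell_sig[OF nn_pos, of "- 1 - real_of_int k" "real_of_int (j - k - 1)"] by (simp add: algebra_simps)
  have "((\<lambda>x. phi_sigma \<sigma> (nn * x - real_of_int k)) has_integral
      ((S (real_of_int (j - k + 1)) / nn - S (real_of_int (j - k - 1)) / nn) / 2))
      {real_of_int j / nn .. (real_of_int j + 1) / nn}"
    unfolding phi_sigma_def using has_integral_divide[OF has_integral_diff[OF i1 i2], of 2]
    by (simp add: algebra_simps)
  then have "integral {real_of_int j / nn .. (real_of_int j + 1) / nn} (\<lambda>x. phi_sigma \<sigma> (nn * x - real_of_int k))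
      = (S (real_of_int (j - k + 1)) / nn - S (real_of_int (j - k - 1)) / nn) / 2"
    by (rule integral_unique)
  also have "\<dots> = (S (real_of_int (j - k + 1)) - S (real_of_int (j - k - 1))) / (2 * nn)"
    by (simp add: diff_divide_distrib)
  finally show ?thesis .
qed

lemma int_Nn:
  "integral {real_of_int j / nn .. (real_of_int j + 1) / nn} Nn
     = (\<Sum>k\<in>{p..q}. v k * ((S (real_of_int (j - k + 1)) - S (real_of_int (j - k - 1))) / (2 * nn)))"
proof -
  have "integral {real_of_int j / nn .. (real_of_int j + 1) / nn} Nn
      = (\<Sum>k\<in>{p..q}. integral {real_of_int j / nn .. (real_of_int j + 1) / nn} (\<lambda>x. v k * phi_sigma \<sigma> (nn * x - real_of_int k)))"
    unfolding Nn_def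
    by (rule integral_sum) (auto intro!: integrable_continuous_real continuous_intros)
  also have "\<dots> = (\<Sum>k\<in>{p..q}. v k * ((S (real_of_int (j - k + 1)) - S (real_of_int (j - k - 1))) / (2 * nn)))"
    by (intro sum.cong refl) (simp add: cell_phi)
  finally show ?thesis .
qed

lemma cell_err: assumes "j \<in> {p..q}"
  shows "\<bar>integral {real_of_int j / nn .. (real_of_int j + 1) / nn} (\<lambda>x. Nn x - f x * Dn x)\<bar> \<le> err_sup \<sigma> a b f n / nn"
proof -
  have "norm (integral {real_of_int j / nn .. (real_of_int j + 1) / nn} (\<lambda>x. Nn x - f x * Dn x))
      \<le> err_sup \<sigma> a b f n * ((real_of_int j + 1) / nn - real_of_int j / nn)"
    by (rule integral_bound[OF cell_le])
      (use cell_sub[OF assms] err_bound in \<open>auto intro!: continuous_intros Nn_cont Dn_cont continuous_on_subset[OF fc]\<close>)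
  then show ?thesis by (simp add: cell_len)
qed

lemma cell_fD: assumes "j \<in> {p..q}" and "g (real_of_int j / nn) \<noteq> 0"
  shows "\<bar>integral {real_of_int j / nn .. (real_of_int j + 1) / nn} (\<lambda>x. f x * Dn x) - v j / nn\<bar>
          \<le> M * (2 * \<sigma> (3 - nn * \<delta>)) / nn"
proof -
  have jl: "real_of_int j / nn > a + \<delta>" and jh: "real_of_int j / nn < b - \<delta>"
    using assms(2) g0[of "real_of_int j / nn"] by force+
  have jl': "real_of_int j > nn * (a + \<delta>)" using jl nn_pos by (simp add: field_simps)
  have jh': "real_of_int j < nn * (b - \<delta>)" using jh nn_pos by (simp add: field_simps)
  have fi: "f integrable_on {real_of_int j / nn .. (real_of_int j + 1) / nn}"
    by (rule integrable_continuous_real) (rule continuous_on_subset[OF fc cell_sub[OF assms(1)]])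
  have "integral {real_of_int j / nn .. (real_of_int j + 1) / nn} (\<lambda>x. f x * Dn x) - v j / nn
      = integral {real_of_int j / nn .. (real_of_int j + 1) / nn} (\<lambda>x. f x * Dn x - f x)"
    unfolding v_def using nn_pos fi
    by (subst integral_diff) (auto intro!: integrable_continuous_real continuous_intros Dn_cont
        continuous_on_subset[OF fc cell_sub[OF assms(1)]])
  moreover have "norm (integral {real_of_int j / nn .. (real_of_int j + 1) / nn} (\<lambda>x. f x * Dn x - f x))
      \<le> (M * (2 * \<sigma> (3 - nn * \<delta>))) * ((real_of_int j + 1) / nn - real_of_int j / nn)"
  proof (rule integral_bound[OF cell_le])
    show "continuous_on {real_of_int j / nn .. (real_of_int j + 1) / nn} (\<lambda>x. f x * Dn x - f x)"
      by (intro continuous_intros Dn_cont continuous_on_subset[OF fc cell_sub[OF assms(1)]])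
    fix x assume x: "x \<in> {real_of_int j / nn .. (real_of_int j + 1) / nn}"
    have u: "nn * x \<ge> real_of_int j" "nn * x \<le> real_of_int j + 1" using x nn_pos by (auto simp: field_simps)
    have xab: "x \<in> {a..b}" using x cell_sub[OF assms(1)] by auto
    have f1: "1 - Dn x = ((1 - \<sigma> (nn*x - p + 1)) + (1 - \<sigma> (nn*x - p)) + \<sigma> (nn*x - q) + \<sigma> (nn*x - q - 1)) / 2"
      unfolding Dn_eq by (simp add: field_simps)
    have f2: "1 - \<sigma> (nn*x - p + 1) \<le> 1 - \<sigma> (nn*x - p)" using mono_s[of "nn*x - p" "nn*x - p + 1"] by simp
    have f3: "1 - \<sigma> (nn*x - p) = \<sigma> (p - nn*x)" using s_neg[of "nn*x - p"] by simp
    have f4: "\<sigma> (p - nn*x) \<le> \<sigma> (3 - nn * \<delta>)"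
      by (rule mono_s) (use u p_hi jl' in \<open>simp add: algebra_simps\<close>)
    have f5: "\<sigma> (nn*x - q - 1) \<le> \<sigma> (nn*x - q)" by (rule mono_s) simp
    have f6: "\<sigma> (nn*x - q) \<le> \<sigma> (3 - nn * \<delta>)"
      by (rule mono_s) (use u q_lo jh' in \<open>simp add: algebra_simps\<close>)
    note facts = f1 f2 f3 f4 f5 f6
    have X1: "1 - \<sigma> (nn*x - p + 1) \<le> \<sigma> (3 - nn * \<delta>)" using facts(2,3,4) by linarith
    have X2: "1 - \<sigma> (nn*x - p) \<le> \<sigma> (3 - nn * \<delta>)" using facts(3,4) by linarith
    have X3: "\<sigma> (nn*x - q - 1) \<le> \<sigma> (3 - nn * \<delta>)" using facts(5,6) by linarith
    have F2: "2 * (1 - Dn x) = (1 - \<sigma> (nn*x - p + 1)) + (1 - \<sigma> (nn*x - p)) + \<sigma> (nn*x - q) + \<sigma> (nn*x - q - 1)"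
      using facts(1) by simp
    have D1: "1 - Dn x \<le> 2 * \<sigma> (3 - nn * \<delta>)"
    proof -
      define A where "A = \<sigma> (nn*x - p + 1)"
      define B where "B = \<sigma> (nn*x - p)"
      define C where "C = \<sigma> (nn*x - q)"
      define E where "E = \<sigma> (nn*x - q - 1)"
      define s3 where "s3 = \<sigma> (3 - nn * \<delta>)"
      have "2 * (1 - Dn x) = (1 - A) + (1 - B) + C + E" "1 - A \<le> s3" "1 - B \<le> s3" "E \<le> s3" "C \<le> s3"
        using F2 X1 X2 X3 facts(6) unfolding A_def B_def C_def E_def s3_def by auto
      then show ?thesis unfolding s3_def[symmetric] by argo
    qed
    have D0: "1 - Dn x \<ge> 0" using Dn_le1[of x] by simp
    have "f x * Dn x - f x = - (f x * (1 - Dn x))" by (simp add: algebra_simps)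
    then have "norm (f x * Dn x - f x) = \<bar>f x\<bar> * (1 - Dn x)" using D0 by (simp only: real_norm_def abs_minus_cancel abs_mult)
    also have "\<dots> \<le> M * (2 * \<sigma> (3 - nn * \<delta>))"
      using fM[OF xab] D0 D1 M0 by (intro mult_mono) auto
    finally show "norm (f x * Dn x - f x) \<le> M * (2 * \<sigma> (3 - nn * \<delta>))" .
  qed
  ultimately show ?thesis by (simp add: cell_len)
qed

definition "Gf i = g (real_of_int i / nn)" for i :: int
definition "H k = (1/2) * (\<Sum>j\<in>{p..q}. Gf j * (S (real_of_int (j - k + 1)) - S (real_of_int (j - k - 1))))" for k :: int

lemma stepE_id:
  "(\<Sum>j\<in>{p..q}. Gf j * (integral {real_of_int j / nn .. (real_of_int j + 1) / nn} Nn - v j / nn))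
     = (1/nn) * (\<Sum>k\<in>{p..q}. v k * (H k - Gf k))"
proof -
  have "(\<Sum>j\<in>{p..q}. Gf j * integral {real_of_int j / nn .. (real_of_int j + 1) / nn} Nn)
      = (\<Sum>j\<in>{p..q}. \<Sum>k\<in>{p..q}. Gf j * (v k * ((S (real_of_int (j - k + 1)) - S (real_of_int (j - k - 1))) / (2 * nn))))"
    by (simp add: int_Nn sum_distrib_left)
  also have "\<dots> = (\<Sum>k\<in>{p..q}. \<Sum>j\<in>{p..q}. Gf j * (v k * ((S (real_of_int (j - k + 1)) - S (real_of_int (j - k - 1))) / (2 * nn))))"
    by (rule sum.swap)
  also have "\<dots> = (\<Sum>k\<in>{p..q}. (1/nn) * (v k * H k))"
    unfolding H_def by (intro sum.cong refl) (simp add: sum_distrib_left sum_divide_distrib diff_divide_distrib algebra_simps)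
  finally have A: "(\<Sum>j\<in>{p..q}. Gf j * integral {real_of_int j / nn .. (real_of_int j + 1) / nn} Nn)
      = (\<Sum>k\<in>{p..q}. (1/nn) * (v k * H k))" .
  have "(\<Sum>j\<in>{p..q}. Gf j * (integral {real_of_int j / nn .. (real_of_int j + 1) / nn} Nn - v j / nn))
      = (\<Sum>j\<in>{p..q}. Gf j * integral {real_of_int j / nn .. (real_of_int j + 1) / nn} Nn)
        - (\<Sum>j\<in>{p..q}. (1/nn) * (v j * Gf j))"
    by (simp add: right_diff_distrib sum_subtractf algebra_simps)
  also have "\<dots> = (1/nn) * (\<Sum>k\<in>{p..q}. v k * (H k - Gf k))"
    unfolding A by (simp add: sum_distrib_left[symmetric] sum_subtractf[symmetric] right_diff_distrib sum_divide_distrib diff_divide_distrib)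
  finally show ?thesis .
qed

lemma stepE_bound:
  "\<bar>\<Sum>k\<in>{p..q}. v k * (H k - Gf k)\<bar> \<le> real (card {p..q}) * Gb * (err_sup \<sigma> a b f n + M * (2 * \<sigma> (3 - nn * \<delta>)))"
proof -
  define E where "E = err_sup \<sigma> a b f n"
  define s3 where "s3 = M * (2 * \<sigma> (3 - nn * \<delta>))"
  define I where "I j = {real_of_int j / nn .. (real_of_int j + 1) / nn}" for j :: int
  have termb: "\<bar>Gf j * (integral (I j) Nn - v j / nn)\<bar> \<le> Gb * ((E + s3) / nn)" if j: "j \<in> {p..q}" for j
  proof (cases "Gf j = 0")
    case True
    then show ?thesis using Gb0 nn_pos M0 err_bound[of a] ab by (simp add: E_def s3_def)
       (smt (verit) divide_nonneg_pos mult_nonneg_nonneg s_ge0)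
  next
    case False
    have ci: "continuous_on (I j) (\<lambda>x. f x * Dn x)"
      unfolding I_def by (intro continuous_intros Dn_cont continuous_on_subset[OF fc cell_sub[OF j]])
    have "integral (I j) Nn - v j / nn = integral (I j) (\<lambda>x. Nn x - f x * Dn x) + (integral (I j) (\<lambda>x. f x * Dn x) - v j / nn)"
      using ci unfolding I_def
      by (subst integral_diff) (auto intro!: integrable_continuous_real Nn_cont)
    moreover have "\<bar>integral (I j) (\<lambda>x. Nn x - f x * Dn x)\<bar> \<le> E / nn" unfolding I_def E_def by (rule cell_err[OF j])
    moreover have "\<bar>integral (I j) (\<lambda>x. f x * Dn x) - v j / nn\<bar> \<le> s3 / nn"
      unfolding I_def s3_def using cell_fD[OF j] False by (simp add: Gf_def)
    ultimately have "\<bar>integral (I j) Nn - v j / nn\<bar> \<le> (E + s3) / nn" by (simp add: add_divide_distrib)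
    moreover have "\<bar>Gf j\<bar> \<le> Gb" by (simp add: Gf_def gb)
    ultimately have "\<bar>Gf j\<bar> * \<bar>integral (I j) Nn - v j / nn\<bar> \<le> Gb * ((E + s3) / nn)"
      by (intro mult_mono) (auto simp: Gb0)
    then show ?thesis by (simp add: abs_mult)
  qed
  have "\<bar>(1/nn) * (\<Sum>k\<in>{p..q}. v k * (H k - Gf k))\<bar> = \<bar>\<Sum>j\<in>{p..q}. Gf j * (integral (I j) Nn - v j / nn)\<bar>"
    unfolding I_def stepE_id ..
  also have "\<dots> \<le> (\<Sum>j\<in>{p..q}. \<bar>Gf j * (integral (I j) Nn - v j / nn)\<bar>)" by (rule sum_abs)
  also have "\<dots> \<le> real (card {p..q}) * (Gb * ((E + s3) / nn))"
    by (rule sum_bounded_above) (rule termb)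
  finally have "\<bar>\<Sum>k\<in>{p..q}. v k * (H k - Gf k)\<bar> / nn \<le> real (card {p..q}) * (Gb * ((E + s3) / nn))"
    using nn_pos by (simp add: abs_mult)
  then show ?thesis using nn_pos unfolding E_def[symmetric] s3_def[symmetric]
    by (simp add: field_simps)
qed

lemma stepF_app: assumes k: "k \<in> {p..q}"
  shows "\<bar>H k - Gf k + h (real_of_int k / nn) / (2 * nn)\<bar> \<le> L * (1/2 + 5 * Ct) / nn^2"
proof -
  have "\<bar>(1/2) * (\<Sum>j\<in>{p..q}. Gf j * ((\<lambda>m. S (real_of_int m)) (j-k+1) - (\<lambda>m. S (real_of_int m)) (j-k-1))) - Gf k + h (k/nn) / (2*nn)\<bar>
           \<le> L * (1/2 + 5*Ct) / nn^2"
  proof (rule stepF[where G = Gf and Sx = "\<lambda>m. S (real_of_int m)" and T = T and p = p and q = q and k = k and Ct = Ct and n = nn and h = h and L = L])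
    fix i :: int
    have le: "(real_of_int i - 1) / nn \<le> real_of_int i / nn" using nn_pos by (simp add: divide_right_mono)
    show "Gf i - Gf (i-1) = integral {(real_of_int i - 1) / nn..real_of_int i / nn} h"
      unfolding Gf_def using gd[OF le] by simp
  next
    fix i :: int assume "i \<le> p \<or> i \<ge> q"
    then show "Gf i = 0"
    proof
      assume "i \<le> p"
      then have "real_of_int i / nn \<le> real_of_int p / nn" using nn_pos by (simp add: divide_right_mono)
      also have "real_of_int p / nn < a + 1 / nn" using p_hi nn_pos by (simp add: field_simps)
      also have "1 / nn \<le> \<delta>" using nd' nn_pos by (simp add: field_simps)
      finally show ?thesis unfolding Gf_def by (intro g0) simp
    next
      assume "i \<ge> q"
      have "b - \<delta> \<le> b - 2 / nn" using nd' nn_pos by (simp add: field_simps)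
      also have "b - 2 / nn < real_of_int q / nn"
      proof -
        have "(nn*b - 2)/nn < real_of_int q / nn" by (rule divide_strict_right_mono) (use q_lo nn_pos in auto)
        moreover have "(nn*b - 2)/nn = b - 2/nn" using nn_pos by (simp add: field_simps)
        ultimately show ?thesis by simp
      qed
      also have "real_of_int q / nn \<le> real_of_int i / nn" using \<open>i \<ge> q\<close> nn_pos by (simp add: divide_right_mono)
      finally show ?thesis unfolding Gf_def by (intro g0) simp
    qed
  next
    show "p \<le> k" "k \<le> q" using k by auto
  next
    show "\<And>m. T m = S (real_of_int m) - (if m \<ge> 0 then 1 else 0)" by (simp add: T_def)
    show "\<And>m. T (-1-m) = - T m" by (rule T_sym)
    show "\<And>m. \<bar>T m\<bar> \<le> Ct / (real_of_int \<bar>m\<bar> + 1)^3" by (rule Ct_bound)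
    show "Ct \<ge> 0" using Ct_pos by simp
  qed (use nn_pos L hc hL in auto)
  then show ?thesis by (simp add: H_def)
qed

lemma stepG:
  "\<bar>integral {a..b} (\<lambda>x. f x * h x) - (1/nn) * (\<Sum>k\<in>{p..q}. v k * h (real_of_int k / nn))\<bar>
     \<le> real (card {p..q}) * (M * L / nn^2)"
proof -
  have pa: "a \<le> real_of_int p / nn" using p_lo nn_pos by (simp add: field_simps)
  have qb: "(real_of_int q + 1) / nn \<le> b" using q_hi nn_pos by (simp add: field_simps)
  have pq': "real_of_int p / nn \<le> (real_of_int q + 1) / nn" using pq nn_pos by (simp add: divide_right_mono)
  have dn: "1 / nn \<le> \<delta>" using nd' nn_pos by (simp add: field_simps)
  have fhc: "continuous_on {a..b} (\<lambda>x. f x * h x)"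
    by (intro continuous_intros fc continuous_on_subset[OF hc]) auto
  have fhi: "(\<lambda>x. f x * h x) integrable_on {a..b}" by (rule integrable_continuous_real[OF fhc])
  have z1: "integral {a..real_of_int p / nn} (\<lambda>x. f x * h x) = 0"
  proof -
    have "integral {a..real_of_int p / nn} (\<lambda>x. f x * h x) = integral {a..real_of_int p / nn} (\<lambda>x. 0)"
    proof (rule integral_cong)
      fix x assume "x \<in> {a..real_of_int p / nn}"
      then have "x \<le> real_of_int p / nn" by simp
      also have "real_of_int p / nn < a + 1 / nn" using p_hi nn_pos by (simp add: field_simps)
      finally have "x \<le> a + \<delta>" using dn by simp
      then show "f x * h x = 0" using h0 by simp
    qed
    then show ?thesis by simp
  qed
  have z2: "integral {(real_of_int q + 1) / nn..b} (\<lambda>x. f x * h x) = 0"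
  proof -
    have "integral {(real_of_int q + 1) / nn..b} (\<lambda>x. f x * h x) = integral {(real_of_int q + 1) / nn..b} (\<lambda>x. 0)"
    proof (rule integral_cong)
      fix x assume "x \<in> {(real_of_int q + 1) / nn..b}"
      then have "x \<ge> (real_of_int q + 1) / nn" by simp
      moreover have "(real_of_int q + 1) / nn > b - 1 / nn"
      proof -
        have "(nn*b - 1)/nn < (real_of_int q + 1) / nn" by (rule divide_strict_right_mono) (use q_lo nn_pos in auto)
        moreover have "(nn*b - 1)/nn = b - 1/nn" using nn_pos by (simp add: field_simps)
        ultimately show ?thesis by simp
      qed
      ultimately have "x \<ge> b - \<delta>" using dn by simp
      then show "f x * h x = 0" using h0 by simp
    qed
    then show ?thesis by simp
  qed
  have "integral {a..b} (\<lambda>x. f x * h x)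
      = integral {a..real_of_int p / nn} (\<lambda>x. f x * h x) + integral {real_of_int p / nn..b} (\<lambda>x. f x * h x)"
    using pa pq' qb fhi by (intro Henstock_Kurzweil_Integration.integral_combine[symmetric]) auto
  also have "integral {real_of_int p / nn..b} (\<lambda>x. f x * h x)
      = integral {real_of_int p / nn..(real_of_int q + 1) / nn} (\<lambda>x. f x * h x) + integral {(real_of_int q + 1) / nn..b} (\<lambda>x. f x * h x)"
    using pa pq' qb by (intro Henstock_Kurzweil_Integration.integral_combine[symmetric])
      (auto intro!: integrable_continuous_real continuous_on_subset[OF fhc])
  also have "integral {real_of_int p / nn..(real_of_int q + 1) / nn} (\<lambda>x. f x * h x)
      = (\<Sum>k\<in>{p..q}. integral {real_of_int k / nn..(real_of_int k + 1) / nn} (\<lambda>x. f x * h x))"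
  proof (rule cells_integral[OF nn_pos])
    show "p \<le> q + 1" using pq by simp
    show "continuous_on {real_of_int p / nn..(real_of_int q + 1) / nn} (\<lambda>x. f x * h x)"
      by (rule continuous_on_subset[OF fhc]) (use pa qb in auto)
  qed
  finally have I: "integral {a..b} (\<lambda>x. f x * h x)
      = (\<Sum>k\<in>{p..q}. integral {real_of_int k / nn..(real_of_int k + 1) / nn} (\<lambda>x. f x * h x))"
    using z1 z2 by simp
  have cellb: "\<bar>integral {real_of_int k / nn..(real_of_int k + 1) / nn} (\<lambda>x. f x * h x) - (1/nn) * (v k * h (real_of_int k / nn))\<bar>
      \<le> M * L / nn^2" if k: "k \<in> {p..q}" for k
  proof -
    have fcc: "continuous_on {real_of_int k / nn..(real_of_int k + 1) / nn} f"
      by (rule continuous_on_subset[OF fc cell_sub[OF k]])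
    have "(1/nn) * (v k * h (real_of_int k / nn)) = integral {real_of_int k / nn..(real_of_int k + 1) / nn} (\<lambda>x. f x * h (real_of_int k / nn))"
      unfolding v_def using nn_pos by simp
    then have "integral {real_of_int k / nn..(real_of_int k + 1) / nn} (\<lambda>x. f x * h x) - (1/nn) * (v k * h (real_of_int k / nn))
        = integral {real_of_int k / nn..(real_of_int k + 1) / nn} (\<lambda>x. f x * (h x - h (real_of_int k / nn)))"
      using fcc by (simp add: right_diff_distrib, subst integral_diff)
        (auto intro!: integrable_continuous_real continuous_intros continuous_on_subset[OF hc])
    moreover have "norm (integral {real_of_int k / nn..(real_of_int k + 1) / nn} (\<lambda>x. f x * (h x - h (real_of_int k / nn))))
        \<le> (M * (L / nn)) * ((real_of_int k + 1) / nn - real_of_int k / nn)"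
    proof (rule integral_bound[OF cell_le])
      show "continuous_on {real_of_int k / nn..(real_of_int k + 1) / nn} (\<lambda>x. f x * (h x - h (real_of_int k / nn)))"
        by (intro continuous_intros fcc continuous_on_subset[OF hc]) auto
      fix x assume x: "x \<in> {real_of_int k / nn..(real_of_int k + 1) / nn}"
      have "\<bar>x - real_of_int k / nn\<bar> \<le> 1 / nn" using x cell_len[of k] by auto
      then have "L * \<bar>x - real_of_int k / nn\<bar> \<le> L * (1 / nn)" by (rule mult_left_mono[OF _ L])
      then have "\<bar>h x - h (real_of_int k / nn)\<bar> \<le> L / nn"
        using hL[of x "real_of_int k / nn"] by simp
      moreover have "\<bar>f x\<bar> \<le> M" using fM x cell_sub[OF k] by auto
      ultimately have "\<bar>f x\<bar> * \<bar>h x - h (real_of_int k / nn)\<bar> \<le> M * (L / nn)"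
        by (intro mult_mono) (auto simp: M0)
      then show "norm (f x * (h x - h (real_of_int k / nn))) \<le> M * (L / nn)"
        by (simp add: abs_mult)
    qed
    ultimately show ?thesis by (simp add: cell_len power2_eq_square)
  qed
  have eq: "integral {a..b} (\<lambda>x. f x * h x) - (1/nn) * (\<Sum>k\<in>{p..q}. v k * h (real_of_int k / nn))
      = (\<Sum>k\<in>{p..q}. integral {real_of_int k / nn..(real_of_int k + 1) / nn} (\<lambda>x. f x * h x) - (1/nn) * (v k * h (real_of_int k / nn)))"
    unfolding I by (simp add: sum_subtractf sum_distrib_left)
  have "\<bar>\<Sum>k\<in>{p..q}. integral {real_of_int k / nn..(real_of_int k + 1) / nn} (\<lambda>x. f x * h x) - (1/nn) * (v k * h (real_of_int k / nn))\<bar>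
     \<le> (\<Sum>k\<in>{p..q}. \<bar>integral {real_of_int k / nn..(real_of_int k + 1) / nn} (\<lambda>x. f x * h x) - (1/nn) * (v k * h (real_of_int k / nn))\<bar>)"
    by (rule sum_abs)
  also have "\<dots> \<le> real (card {p..q}) * (M * L / nn^2)"
    by (rule sum_bounded_above) (rule cellb)
  finally show ?thesis unfolding eq .
qed

lemma total_bound:
  "\<bar>integral {a..b} (\<lambda>x. f x * h x)\<bar> \<le> (b - a) * (M * L / nn + 2 * M * L * (1/2 + 5 * Ct) / nn
      + 2 * nn * Gb * (err_sup \<sigma> a b f n + M * (2 * \<sigma> (3 - nn * \<delta>))))"
proof -
  define c where "c = real (card {p..q})"
  define Ce where "Ce = 1/2 + 5 * Ct"
  define E where "E = err_sup \<sigma> a b f n"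
  define s3 where "s3 = M * (2 * \<sigma> (3 - nn * \<delta>))"
  define e where "e k = H k - Gf k + h (real_of_int k / nn) / (2 * nn)" for k
  have c0: "c \<ge> 0" by (simp add: c_def)
  have cb: "c \<le> nn * (b - a)" unfolding c_def by (rule cardK)
  have Ce0: "Ce \<ge> 0" using Ct_pos by (simp add: Ce_def)
  have E0: "E \<ge> 0" using err_bound[of a] ab unfolding E_def by (smt (verit) atLeastAtMost_iff)
  have s30: "s3 \<ge> 0" using M0 s_ge0 by (simp add: s3_def)
  have id: "(1/nn) * (\<Sum>k\<in>{p..q}. v k * h (real_of_int k / nn))
      = 2 * (\<Sum>k\<in>{p..q}. v k * e k) - 2 * (\<Sum>k\<in>{p..q}. v k * (H k - Gf k))"
  proof -
    have "(1/nn) * (v k * h (real_of_int k / nn)) = 2 * (v k * e k) - 2 * (v k * (H k - Gf k))" for k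
      using nn_pos by (simp add: e_def field_simps)
    then show ?thesis by (simp add: sum_distrib_left sum_subtractf[symmetric])
  qed
  have b1: "\<bar>\<Sum>k\<in>{p..q}. v k * e k\<bar> \<le> c * (M * (L * Ce / nn^2))"
  proof -
    have "\<bar>\<Sum>k\<in>{p..q}. v k * e k\<bar> \<le> (\<Sum>k\<in>{p..q}. \<bar>v k * e k\<bar>)" by (rule sum_abs)
    also have "\<dots> \<le> c * (M * (L * Ce / nn^2))" unfolding c_def
    proof (rule sum_bounded_above)
      fix k assume k: "k \<in> {p..q}"
      have "\<bar>v k\<bar> * \<bar>e k\<bar> \<le> M * (L * Ce / nn^2)"
        using v_bound[OF k] stepF_app[OF k] M0 unfolding e_def Ce_def by (intro mult_mono) auto
      then show "\<bar>v k * e k\<bar> \<le> M * (L * Ce / nn^2)" by (simp add: abs_mult)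
    qed
    finally show ?thesis .
  qed
  have b2: "\<bar>\<Sum>k\<in>{p..q}. v k * (H k - Gf k)\<bar> \<le> c * Gb * (E + s3)"
    using stepE_bound unfolding c_def E_def s3_def .
  have b3: "\<bar>integral {a..b} (\<lambda>x. f x * h x) - (1/nn) * (\<Sum>k\<in>{p..q}. v k * h (real_of_int k / nn))\<bar> \<le> c * (M * L / nn^2)"
    using stepG unfolding c_def .
  have tot: "\<bar>integral {a..b} (\<lambda>x. f x * h x)\<bar> \<le> c * (M * L / nn^2) + 2 * (c * (M * (L * Ce / nn^2))) + 2 * (c * Gb * (E + s3))"
    using b1 b2 b3 unfolding id by (simp add: abs_le_iff)
  have t1: "c * (M * L / nn^2) \<le> (b - a) * (M * L / nn)"
  proof -
    have "c * (M * L / nn^2) \<le> (nn * (b - a)) * (M * L / nn^2)" using cb M0 L by (intro mult_right_mono) auto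
    also have "\<dots> = (b - a) * (M * L / nn)" using nn_pos by (simp add: power2_eq_square field_simps)
    finally show ?thesis .
  qed
  have t2: "2 * (c * (M * (L * Ce / nn^2))) \<le> (b - a) * (2 * M * L * Ce / nn)"
  proof -
    have "c * (M * (L * Ce / nn^2)) \<le> (nn * (b - a)) * (M * (L * Ce / nn^2))" using cb M0 L Ce0 by (intro mult_right_mono) auto
    also have "\<dots> = (b - a) * (M * L * Ce / nn)" using nn_pos by (simp add: power2_eq_square field_simps)
    finally have "c * (M * (L * Ce / nn^2)) \<le> (b - a) * (M * L * Ce / nn)" .
    moreover have "2 * ((b - a) * (M * L * Ce / nn)) = (b - a) * (2 * M * L * Ce / nn)" by simp
    ultimately show ?thesis by argo
  qed
  have t3: "2 * (c * Gb * (E + s3)) \<le> (b - a) * (2 * nn * Gb * (E + s3))"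
  proof -
    have "c * (Gb * (E + s3)) \<le> (nn * (b - a)) * (Gb * (E + s3))" using cb Gb0 E0 s30 by (intro mult_right_mono) auto
    then show ?thesis by (simp add: algebra_simps)
  qed
  show ?thesis using tot t1 t2 t3 unfolding E_def[symmetric] s3_def[symmetric] Ce_def[symmetric]
    by (simp add: algebra_simps)
qed

end

context satctx begin

lemma n_sigma_lim: "(\<lambda>n. real n * \<sigma> (3 - real n * \<delta>)) \<longlonglongrightarrow> 0"
proof -
  obtain C where C: "C > 0" "\<And>t. t \<ge> 0 \<Longrightarrow> \<sigma> (-t) \<le> C / (t+1)^3" using tail by blast
  have up: "(\<lambda>n. real n * (C / (real n * \<delta> - 2)^3)) \<longlonglongrightarrow> 0"
    using dl by real_asymp
  show ?thesis
  proof (rule tendsto_sandwich[OF _ _ tendsto_const up])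
    show "\<forall>\<^sub>F n in sequentially. 0 \<le> real n * \<sigma> (3 - real n * \<delta>)" using s_ge0 by simp
    obtain N :: nat where N: "real N * \<delta> \<ge> 3"
    proof -
      obtain N :: nat where "real N > 3 / \<delta>" using reals_Archimedean2 by blast
      then have "real N * \<delta> \<ge> 3" using dl by (simp add: field_simps)
      then show ?thesis using that by blast
    qed
    show "\<forall>\<^sub>F n in sequentially. real n * \<sigma> (3 - real n * \<delta>) \<le> real n * (C / (real n * \<delta> - 2)^3)"
    proof (rule eventually_sequentiallyI[of N])
      fix n assume "N \<le> n"
      then have nd: "real n * \<delta> \<ge> 3" using N dl by (smt (verit) mult_right_mono of_nat_mono)
      have "\<sigma> (- (real n * \<delta> - 3)) \<le> C / (real n * \<delta> - 3 + 1)^3" using C(2)[of "real n * \<delta> - 3"] nd by simp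
      then have "\<sigma> (3 - real n * \<delta>) \<le> C / (real n * \<delta> - 2)^3" by (simp add: algebra_simps)
      then show "real n * \<sigma> (3 - real n * \<delta>) \<le> real n * (C / (real n * \<delta> - 2)^3)"
        by (intro mult_left_mono) auto
    qed
  qed
qed

lemma int_zero:
  assumes o: "err_sup \<sigma> a b f \<in> o(\<lambda>n. 1 / real n)"
  shows "integral {a..b} (\<lambda>x. f x * h x) = 0"
proof -
  define E where "E n = err_sup \<sigma> a b f n" for n
  define Ce where "Ce = 1/2 + 5 * Ct"
  define B where "B n = (b - a) * ((M * L + 2 * M * L * Ce) * (1 / real n) + 2 * Gb * (real n * E n)
      + 4 * M * Gb * (real n * \<sigma> (3 - real n * \<delta>)))" for n
  have l1: "(\<lambda>n. real n * E n) \<longlonglongrightarrow> 0"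
  proof -
    have "(\<lambda>n. E n / (1 / real n)) \<longlonglongrightarrow> 0" using smalloD_tendsto[OF o] unfolding E_def .
    moreover have "(\<lambda>n. E n / (1 / real n)) = (\<lambda>n. real n * E n)" by (simp add: fun_eq_iff)
    ultimately show ?thesis by simp
  qed
  have "B \<longlonglongrightarrow> (b - a) * ((M * L + 2 * M * L * Ce) * 0 + 2 * Gb * 0 + 4 * M * Gb * 0)"
    unfolding B_def by (intro tendsto_intros l1 n_sigma_lim lim_1_over_n)
  then have Bl: "B \<longlonglongrightarrow> 0" by simp
  obtain N :: nat where N: "real N * \<delta> \<ge> 3" "real N * (b - a) \<ge> 2"
  proof -
    obtain N :: nat where "real N > 3 / \<delta> + 2 / (b - a)" using reals_Archimedean2 by blast
    moreover have "3 / \<delta> \<ge> 0" "2 / (b - a) \<ge> 0" using dl ab by auto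
    ultimately have "real N > 3 / \<delta>" "real N > 2 / (b - a)" by linarith+
    then have "real N * \<delta> \<ge> 3" "real N * (b - a) \<ge> 2" using dl ab by (simp_all add: field_simps)
    then show ?thesis using that by blast
  qed
  have ev: "\<forall>\<^sub>F n in sequentially. \<bar>integral {a..b} (\<lambda>x. f x * h x)\<bar> \<le> B n"
  proof (rule eventually_sequentiallyI[of N])
    fix n assume "N \<le> n"
    then have "real N \<le> real n" by simp
    then have nd: "real n * \<delta> \<ge> 3" and nb: "real n * (b - a) \<ge> 2"
      using N dl ab by (smt (verit) mult_right_mono)+
    have npos: "real n > 0" using nd dl by (smt (verit) mult_nonpos_nonneg of_nat_0_le_iff)
    interpret S: satn \<sigma> \<alpha> a b f h g M \<delta> L Gb n
      by unfold_locales (use nd nb in auto)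
    have "\<bar>integral {a..b} (\<lambda>x. f x * h x)\<bar> \<le> (b - a) * (M * L / real n + 2 * M * L * (1/2 + 5 * Ct) / real n
      + 2 * real n * Gb * (err_sup \<sigma> a b f n + M * (2 * \<sigma> (3 - real n * \<delta>))))"
      using S.total_bound unfolding S.nn_def .
    also have "\<dots> = B n" unfolding B_def E_def Ce_def using npos by (simp add: field_simps)
    finally show "\<bar>integral {a..b} (\<lambda>x. f x * h x)\<bar> \<le> B n" .
  qed
  have "\<bar>integral {a..b} (\<lambda>x. f x * h x)\<bar> \<le> 0"
    by (rule tendsto_lowerbound[OF Bl ev]) simp
  then show ?thesis by simp
qed

end

context sigctx begin

lemma tents_zero:
  assumes ab: "a < b" and fc: "continuous_on {a..b} f" and o: "err_sup \<sigma> a b f \<in> o(\<lambda>n. 1 / real n)"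
    and e: "e > 0" and c: "a + 2*e \<le> c" "c \<le> b - 2*e" and d: "a + 2*e \<le> d" "d \<le> b - 2*e"
  shows "integral {a..b} (\<lambda>x. f x * (tent c e x - tent d e x)) = 0"
proof -
  obtain M where M: "M \<ge> 0" "\<And>x. x \<in> {a..b} \<Longrightarrow> norm (f x) \<le> M"
    using continuous_on_compact_bound[OF compact_Icc fc] by blast
  define h where "h x = tent c e x - tent d e x" for x
  define g where "g x = integral {a..x} h" for x
  define \<delta> where "\<delta> = e / 2"
  have hc: "continuous_on A h" for A unfolding h_def by (intro continuous_intros tent_cont)
  have hint: "h integrable_on {x..y}" for x y by (rule integrable_continuous_real[OF hc])
  have h0: "h x = 0" if "x \<le> a + \<delta> \<or> x \<ge> b - \<delta>" for x
  proof -
    have "e \<le> \<bar>x - c\<bar>" "e \<le> \<bar>x - d\<bar>" using that c d e by (auto simp: \<delta>_def abs_if)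
    then show ?thesis unfolding h_def by (simp add: tent_zero)
  qed
  have h0': "integral {x..y} h = 0" if "y \<le> a + \<delta>" for x y
  proof -
    have "integral {x..y} h = integral {x..y} (\<lambda>x. 0)" by (rule integral_cong) (use that h0 in auto)
    then show ?thesis by simp
  qed
  have hL: "\<bar>h x - h y\<bar> \<le> 2 * \<bar>x - y\<bar>" for x y
    using tent_lip[of c e x y] tent_lip[of d e x y] unfolding h_def by (simp add: abs_le_iff)
  have gd: "g y - g x = integral {x..y} h" if xy: "x \<le> y" for x y
  proof (cases "a \<le> x")
    case True
    then show ?thesis unfolding g_def
      using Henstock_Kurzweil_Integration.integral_combine[OF True xy hint[of a y]] by simp
  next
    case False
    then have gx: "g x = 0" unfolding g_def by simp
    show ?thesis
    proof (cases "a \<le> y")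
      case True
      have "integral {x..y} h = integral {x..a} h + integral {a..y} h"
        using Henstock_Kurzweil_Integration.integral_combine[of x a y h] False True hint by simp
      moreover have "integral {x..a} h = 0" by (rule h0') (use e in \<open>simp add: \<delta>_def\<close>)
      ultimately show ?thesis using gx by (simp add: g_def)
    next
      case False
      then have "g y = 0" unfolding g_def by simp
      moreover have "integral {x..y} h = 0" by (rule h0') (use False e in \<open>simp add: \<delta>_def\<close>)
      ultimately show ?thesis using gx by simp
    qed
  qed
  have g0: "g x = 0" if "x \<le> a + \<delta> \<or> x \<ge> b - \<delta>" for x
    using that
  proof
    assume "x \<le> a + \<delta>"
    then show ?thesis unfolding g_def by (rule h0')
  next
    assume x: "x \<ge> b - \<delta>"
    have "(tent c e has_integral e^2) {a..x}" by (rule tent_has_integral) (use e c x in \<open>auto simp: \<delta>_def\<close>)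
    moreover have "(tent d e has_integral e^2) {a..x}" by (rule tent_has_integral) (use e d x in \<open>auto simp: \<delta>_def\<close>)
    ultimately have "(h has_integral e^2 - e^2) {a..x}" unfolding h_def by (rule has_integral_diff)
    then show ?thesis unfolding g_def by (simp add: integral_unique)
  qed
  have gb: "\<bar>g x\<bar> \<le> 2 * e * (b - a)" for x
  proof (cases "x \<le> a + \<delta> \<or> x \<ge> b - \<delta>")
    case True
    then show ?thesis using g0 e ab by simp
  next
    case False
    then have x: "a \<le> x" "x \<le> b" using e by (auto simp: \<delta>_def)
    have "norm (integral {a..x} h) \<le> (2 * e) * (x - a)"
    proof (rule integral_bound[OF x(1) hc])
      fix t
      show "norm (h t) \<le> 2 * e" using e unfolding h_def tent_def by (simp add: max_def abs_if)
    qed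
    also have "\<dots> \<le> 2 * e * (b - a)" using x e by (intro mult_left_mono) auto
    finally show ?thesis unfolding g_def by simp
  qed
  interpret SC: satctx \<sigma> \<alpha> a b f h g M \<delta> 2 "2 * e * (b - a)"
  proof unfold_locales
    show "a < b" by fact
    show "continuous_on {a..b} f" by fact
    show "\<And>x. x \<in> {a..b} \<Longrightarrow> \<bar>f x\<bar> \<le> M" using M by simp
    show "\<delta> > 0" using e by (simp add: \<delta>_def)
    show "continuous_on UNIV h" by (rule hc)
    show "\<And>x y. \<bar>h x - h y\<bar> \<le> 2 * \<bar>x - y\<bar>" by (rule hL)
    show "(0::real) \<le> 2" by simp
    show "\<And>x. x \<le> a + \<delta> \<or> x \<ge> b - \<delta> \<Longrightarrow> h x = 0" by (rule h0)
    show "\<And>x y. x \<le> y \<Longrightarrow> g y - g x = integral {x..y} h" by (rule gd)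
    show "\<And>x. x \<le> a + \<delta> \<or> x \<ge> b - \<delta> \<Longrightarrow> g x = 0" by (rule g0)
    show "\<And>x. \<bar>g x\<bar> \<le> 2 * e * (b - a)" by (rule gb)
  qed
  show ?thesis using SC.int_zero[OF o] unfolding h_def .
qed

end

context sigctx begin

lemma no_lt:
  assumes ab: "a < b" and fc: "continuous_on {a..b} f" and o: "err_sup \<sigma> a b f \<in> o(\<lambda>n. 1 / real n)"
    and c: "c \<in> {a<..<b}" and d: "d \<in> {a<..<b}"
  shows "\<not> f d < f c"
proof
  assume lt: "f d < f c"
  define \<eta> where "\<eta> = (f c - f d) / 4"
  have \<eta>: "\<eta> > 0" using lt by (simp add: \<eta>_def)
  have cab: "c \<in> {a..b}" "d \<in> {a..b}" using c d by auto
  obtain e1 where e1: "e1 > 0" "\<And>x. x \<in> {a..b} \<Longrightarrow> dist x c < e1 \<Longrightarrow> dist (f x) (f c) < \<eta>"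
    using fc cab(1) \<eta> unfolding continuous_on_iff by blast
  obtain e2 where e2: "e2 > 0" "\<And>x. x \<in> {a..b} \<Longrightarrow> dist x d < e2 \<Longrightarrow> dist (f x) (f d) < \<eta>"
    using fc cab(2) \<eta> unfolding continuous_on_iff by blast
  define e where "e = min (min e1 e2) (min (min ((c-a)/2) ((b-c)/2)) (min ((d-a)/2) ((b-d)/2)))"
  have e: "e > 0" using e1 e2 c d by (auto simp: e_def)
  have ee0: "e \<le> e1" "e \<le> e2" "e \<le> (c-a)/2" "e \<le> (b-c)/2" "e \<le> (d-a)/2" "e \<le> (b-d)/2"
    unfolding e_def by (meson min.cobounded1 min.cobounded2 order_trans)+
  have ee: "e \<le> e1" "e \<le> e2" "a + 2*e \<le> c" "c \<le> b - 2*e" "a + 2*e \<le> d" "d \<le> b - 2*e"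
    using ee0 by argo+
  have tc: "(tent c e has_integral e^2) {a..b}" by (rule tent_has_integral) (use e ee in auto)
  have td: "(tent d e has_integral e^2) {a..b}" by (rule tent_has_integral) (use e ee in auto)
  have ic: "(\<lambda>x. f x * tent c e x) integrable_on {a..b}"
    by (intro integrable_continuous_real continuous_intros fc tent_cont)
  have id: "(\<lambda>x. f x * tent d e x) integrable_on {a..b}"
    by (intro integrable_continuous_real continuous_intros fc tent_cont)
  define Fc where "Fc = integral {a..b} (\<lambda>x. f x * tent c e x)"
  define Fd where "Fd = integral {a..b} (\<lambda>x. f x * tent d e x)"
  have Z: "Fc - Fd = 0"
  proof -
    have "integral {a..b} (\<lambda>x. f x * (tent c e x - tent d e x)) = 0"
      by (rule tents_zero[OF ab fc o e]) (use ee in auto)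
    moreover have "integral {a..b} (\<lambda>x. f x * (tent c e x - tent d e x)) = Fc - Fd"
      unfolding Fc_def Fd_def using ic id by (simp add: right_diff_distrib integral_diff)
    ultimately show ?thesis by simp
  qed
  have Ic: "Fc \<ge> (f c - \<eta>) * e^2"
  proof -
    have "integral {a..b} (\<lambda>x. (f x - (f c - \<eta>)) * tent c e x) \<ge> 0"
    proof (rule integral_nonneg)
      show "(\<lambda>x. (f x - (f c - \<eta>)) * tent c e x) integrable_on {a..b}"
        by (intro integrable_continuous_real continuous_intros fc tent_cont)
      fix x assume x: "x \<in> {a..b}"
      show "0 \<le> (f x - (f c - \<eta>)) * tent c e x"
      proof (cases "\<bar>x - c\<bar> < e")
        case True
        then have "dist (f x) (f c) < \<eta>" using e1(2)[OF x] ee by (simp add: dist_real_def)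
        then have "f x - (f c - \<eta>) \<ge> 0" by (simp add: dist_real_def)
        then show ?thesis using tent_nonneg by simp
      next
        case False
        then show ?thesis by (simp add: tent_zero)
      qed
    qed
    moreover have "integral {a..b} (\<lambda>x. (f x - (f c - \<eta>)) * tent c e x) = Fc - (f c - \<eta>) * e^2"
    proof -
      have "((\<lambda>x. (f c - \<eta>) * tent c e x) has_integral (f c - \<eta>) * e^2) {a..b}"
        by (rule has_integral_mult_right[OF tc])
      moreover have "((\<lambda>x. f x * tent c e x) has_integral Fc) {a..b}"
        unfolding Fc_def using ic by (rule integrable_integral)
      ultimately have "((\<lambda>x. f x * tent c e x - (f c - \<eta>) * tent c e x) has_integral Fc - (f c - \<eta>) * e^2) {a..b}"
        by (intro has_integral_diff)
      then show ?thesis by (simp add: left_diff_distrib integral_unique)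
    qed
    ultimately show ?thesis by simp
  qed
  have Id: "Fd \<le> (f d + \<eta>) * e^2"
  proof -
    have "integral {a..b} (\<lambda>x. ((f d + \<eta>) - f x) * tent d e x) \<ge> 0"
    proof (rule integral_nonneg)
      show "(\<lambda>x. ((f d + \<eta>) - f x) * tent d e x) integrable_on {a..b}"
        by (intro integrable_continuous_real continuous_intros fc tent_cont)
      fix x assume x: "x \<in> {a..b}"
      show "0 \<le> ((f d + \<eta>) - f x) * tent d e x"
      proof (cases "\<bar>x - d\<bar> < e")
        case True
        then have "dist (f x) (f d) < \<eta>" using e2(2)[OF x] ee by (simp add: dist_real_def)
        then have "(f d + \<eta>) - f x \<ge> 0" by (simp add: dist_real_def)
        then show ?thesis using tent_nonneg by simp
      next
        case False
        then show ?thesis by (simp add: tent_zero)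
      qed
    qed
    moreover have "integral {a..b} (\<lambda>x. ((f d + \<eta>) - f x) * tent d e x) = (f d + \<eta>) * e^2 - Fd"
    proof -
      have "((\<lambda>x. (f d + \<eta>) * tent d e x) has_integral (f d + \<eta>) * e^2) {a..b}"
        by (rule has_integral_mult_right[OF td])
      moreover have "((\<lambda>x. f x * tent d e x) has_integral Fd) {a..b}"
        unfolding Fd_def using id by (rule integrable_integral)
      ultimately have "((\<lambda>x. (f d + \<eta>) * tent d e x - f x * tent d e x) has_integral (f d + \<eta>) * e^2 - Fd) {a..b}"
        by (intro has_integral_diff)
      then show ?thesis by (simp add: left_diff_distrib integral_unique)
    qed
    ultimately show ?thesis by simp
  qed
  have "(f c - \<eta>) * e^2 - (f d + \<eta>) * e^2 = 2 * \<eta> * e^2" by (simp add: \<eta>_def algebra_simps)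
  moreover have "2 * \<eta> * e^2 > 0" using \<eta> e by simp
  ultimately show False using Z Ic Id by linarith
qed

lemma forward:
  assumes ab: "a < b" and fc: "continuous_on {a..b} f" and o: "err_sup \<sigma> a b f \<in> o(\<lambda>n. 1 / real n)"
  shows "\<exists>c. \<forall>x\<in>{a..b}. f x = c"
proof -
  define m where "m = (a + b) / 2"
  have m: "m \<in> {a<..<b}" using ab by (simp add: m_def)
  have inner: "f x = f m" if "x \<in> {a<..<b}" for x
    using no_lt[OF ab fc o that m] no_lt[OF ab fc o m that] by linarith
  have "closed {x \<in> {a..b}. f x = f m}" by (rule continuous_closed_preimage_constant[OF fc]) simp
  moreover have "{a<..<b} \<subseteq> {x \<in> {a..b}. f x = f m}" using inner by auto
  ultimately have "closure {a<..<b} \<subseteq> {x \<in> {a..b}. f x = f m}" by (intro closure_minimal)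
  then have "{a..b} \<subseteq> {x \<in> {a..b}. f x = f m}" using ab by simp
  then show ?thesis by blast
qed

end

context sigctx begin

lemma backward:
  assumes ab: "a < b" and const: "\<forall>x\<in>{a..b}. f x = c0"
  shows "err_sup \<sigma> a b f \<in> o(\<lambda>n. 1 / real n)"
proof -
  obtain N :: nat where N: "real N * (b - a) \<ge> 2" "N \<ge> 1"
  proof -
    obtain N :: nat where "real N > 2 / (b - a)" using reals_Archimedean2 by blast
    then have "real (N + 1) * (b - a) \<ge> 2" using ab by (simp add: field_simps)
    then show ?thesis using that[of "N+1"] by simp
  qed
  have fc: "continuous_on {a..b} f"
    by (rule continuous_on_eq[of _ "\<lambda>x. c0"]) (use const in auto)
  have zero: "err_sup \<sigma> a b f n = 0" if n: "n \<ge> N" for n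
  proof -
    have npos: "real n > 0" using n N by simp
    have nb: "real n * (b - a) \<ge> 2" using n N ab by (smt (verit) mult_right_mono of_nat_mono)
    interpret S: satn \<sigma> \<alpha> a b f "\<lambda>x. 0" "\<lambda>x. 0" "\<bar>c0\<bar>" "3 / real n" 0 0 n
      by unfold_locales (use ab fc const npos nb in auto)
    have v: "S.v k = c0" if k: "k \<in> {S.p..S.q}" for k
    proof -
      have "integral {real_of_int k / S.nn .. (real_of_int k + 1) / S.nn} f
          = integral {real_of_int k / S.nn .. (real_of_int k + 1) / S.nn} (\<lambda>x. c0)"
        by (rule integral_cong) (use S.cell_sub[OF k] const in auto)
      also have "\<dots> = c0 / S.nn" using S.cell_le[of k] S.cell_len[of k] by simp
      finally show ?thesis unfolding S.v_def using S.nn_pos by simp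
    qed
    have "\<bar>kantorovich_nn \<sigma> a b n f x - f x\<bar> = 0" if x: "x \<in> {a..b}" for x
    proof -
      have "S.Nn x = c0 * S.Dn x" unfolding S.Nn_def S.Dn_def
        by (simp add: sum_distrib_left v)
      then show ?thesis using S.K_eq[of x] S.Dn_pos[OF x] const x by simp
    qed
    then have "err_sup \<sigma> a b f n = (SUP x\<in>{a..b}. (0::real))"
      unfolding err_sup_def by (intro SUP_cong) auto
    then show ?thesis using ab by simp
  qed
  show ?thesis
  proof (rule landau_o.smallI)
    fix c :: real assume "c > 0"
    show "\<forall>\<^sub>F n in at_top. norm (err_sup \<sigma> a b f n) \<le> c * norm (1 / real n)"
      using \<open>c > 0\<close> by (intro eventually_at_top_linorderI[of N]) (simp add: zero)
  qed
qed

end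

theorem theorem6p1:
  fixes \<sigma> f :: "real \<Rightarrow> real" and a b \<alpha> :: real
  assumes "a < b"
    and "sigmoidal \<sigma>" and "Sigma1 \<sigma>" and "Sigma2 \<sigma>" and "Sigma3 \<sigma> \<alpha>"
    and "\<sigma> 1 < 1" and "\<alpha> > 2"
    and "continuous_on {a..b} f"
  shows "err_sup \<sigma> a b f \<in> o(\<lambda>n. 1 / real n) \<longleftrightarrow> (\<exists>c. \<forall>x\<in>{a..b}. f x = c)"
proof -
  interpret sigctx \<sigma> \<alpha>
    by unfold_locales (use assms in auto)
  show ?thesis
  proof
    assume "err_sup \<sigma> a b f \<in> o(\<lambda>n. 1 / real n)"
    then show "\<exists>c. \<forall>x\<in>{a..b}. f x = c" by (rule forward[OF assms(1) assms(8)])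
  next
    assume "\<exists>c. \<forall>x\<in>{a..b}. f x = c"
    then obtain c where "\<forall>x\<in>{a..b}. f x = c" by blast
    then show "err_sup \<sigma> a b f \<in> o(\<lambda>n. 1 / real n)" by (rule backward[OF assms(1)])
  qed
qed

end
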